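(* There is a rule assigning to every bi-Lipschitz homeomorphism $\varphi$ of a closed unit square $S=[a,a+1]\times[b,b+1]\subset\mathbb{R}^2$ onto itself fixing the four vertices of $S$ a bi-Lipschitz homeomorphism $\overline{\varphi}\colon S\times[0,1]\to S\times[0,1]$ such that $\overline{\varphi}=\mathrm{id}$ on $S\times\{0\}$ and $\overline{\varphi}(x,1)=(\varphi(x),1)$ for $x\in S$, and which is compatible in the following sense: if $\varphi\colon[0,1]^2\to[0,1]^2$ and $\varphi'\colon[1,2]\times[0,1]\to[1,2]\times[0,1]$ are two such maps with $\varphi=\varphi'$ on the common edge $\{1\}\times[0,1]$, then $\overline{\varphi}=\overline{\varphi}'$ on $\{1\}\times[0,1]\times[0,1]$. *)

theory Defs
  imports "HOL-Analysis.Analysis"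
begin

definition usq :: "real \<Rightarrow> real \<Rightarrow> (real \<times> real) set" where
  "usq a b = {a..a+1} \<times> {b..b+1}"

definition bilipschitz_homeo :: "'a::metric_space set \<Rightarrow> 'b::metric_space set \<Rightarrow> ('a \<Rightarrow> 'b) \<Rightarrow> bool" where
  "bilipschitz_homeo S T f \<longleftrightarrow>
     (\<exists>g. homeomorphism S T f g \<and> (\<exists>C. C-lipschitz_on S f) \<and> (\<exists>C. C-lipschitz_on T g))"

definition sq_admissible :: "real \<Rightarrow> real \<Rightarrow> (real \<times> real \<Rightarrow> real \<times> real) \<Rightarrow> bool" where
  "sq_admissible a b \<phi> \<longleftrightarrow> bilipschitz_homeo (usq a b) (usq a b) \<phi> \<and>
     \<phi> (a, b) = (a, b) \<and> \<phi> (a+1, b) = (a+1, b) \<and>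
     \<phi> (a, b+1) = (a, b+1) \<and> \<phi> (a+1, b+1) = (a+1, b+1)"

end

theory Submission
  imports Defs
begin

definition bd2 :: "real \<Rightarrow> real \<Rightarrow> real \<times> real \<Rightarrow> bool" where
  "bd2 a b p \<longleftrightarrow> p \<in> usq a b \<and> (fst p = a \<or> fst p = a+1 \<or> snd p = b \<or> snd p = b+1)"

lemma interior_usq: "interior (usq a b) = {a<..<a+1} \<times> {b<..<b+1}"
  by (simp add: usq_def interior_Times)

lemma bd_pres:
  assumes h: "homeomorphism (usq a b) (usq a b) \<phi> \<psi>" and p: "bd2 a b p"
  shows "bd2 a b (\<phi> p)"
proof (rule ccontr)
  assume nb: "\<not> bd2 a b (\<phi> p)"
  have pS: "p \<in> usq a b" using p by (simp add: bd2_def)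
  have fpS: "\<phi> p \<in> usq a b" using h pS by (metis homeomorphism_image1 imageI)
  have "\<phi> p \<in> interior (usq a b)"
    using nb fpS unfolding interior_usq bd2_def by (auto simp: usq_def)
  moreover have "continuous_on (usq a b) \<psi>" using h by (simp add: homeomorphism_def)
  moreover have "inj_on \<psi> (usq a b)" using h by (metis homeomorphism_apply2 inj_on_inverseI)
  ultimately have "\<psi> (\<phi> p) \<in> interior (\<psi> ` usq a b)"
    using continuous_image_subset_interior[of "usq a b" \<psi>] by auto
  moreover have "\<psi> ` usq a b = usq a b" using h by (simp add: homeomorphism_def)
  moreover have "\<psi> (\<phi> p) = p" using h pS by (simp add: homeomorphism_apply1)
  ultimately have "p \<in> interior (usq a b)" by simp
  then show False using p unfolding interior_usq bd2_def by auto
qed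

definition uu :: "real \<Rightarrow> real \<Rightarrow> real \<times> real \<Rightarrow> real" where
  "uu a b p = (if (snd p - b) - (fst p - a) \<le> 0 then (fst p - a) + (snd p - b) else 4 - (fst p - a) - (snd p - b))"

lemma uu_cont: "continuous_on ({p. bd2 a b p} - {(a,b)}) (uu a b)"
  unfolding uu_def
proof (rule continuous_on_cases_le)
  fix p assume "p \<in> {p. bd2 a b p} - {(a, b)}" "snd p - b - (fst p - a) = 0"
  then show "fst p - a + (snd p - b) = 4 - (fst p - a) - (snd p - b)"
    by (cases p) (auto simp: bd2_def usq_def)
qed (auto intro!: continuous_intros)

lemma uu_inj: "inj_on (uu a b) ({p. bd2 a b p} - {(a,b)})"
proof (rule inj_onI)
  fix p q assume p: "p \<in> {p. bd2 a b p} - {(a,b)}" and q: "q \<in> {p. bd2 a b p} - {(a,b)}"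
    and e: "uu a b p = uu a b q"
  obtain x y where pe: "p = (x,y)" by (cases p)
  obtain x' y' where qe: "q = (x',y')" by (cases q)
  show "p = q" using p q e unfolding pe qe
    by (auto simp: bd2_def usq_def uu_def split: if_splits)
qed

lemma uu_12: "bd2 a b p \<Longrightarrow> p \<noteq> (a,b) \<Longrightarrow> 1 \<le> uu a b p \<Longrightarrow> uu a b p \<le> 2 \<Longrightarrow> fst p = a+1"
  by (cases p) (auto simp: bd2_def usq_def uu_def split: if_splits)

lemma uu_23: "bd2 a b p \<Longrightarrow> p \<noteq> (a,b) \<Longrightarrow> 2 \<le> uu a b p \<Longrightarrow> uu a b p \<le> 3 \<Longrightarrow> snd p = b+1"
  by (cases p) (auto simp: bd2_def usq_def uu_def split: if_splits)

lemma arc: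
  fixes u :: "real \<times> real \<Rightarrow> real" and \<gamma> :: "real \<Rightarrow> real \<times> real"
  assumes "continuous_on D u" "inj_on u D" "continuous_on {s..t} \<gamma>" "inj_on \<gamma> {s..t}"
    "\<gamma> ` {s..t} \<subseteq> D" "s < x" "x < t"
  shows "(u (\<gamma> s) < u (\<gamma> x) \<and> u (\<gamma> x) < u (\<gamma> t)) \<or> (u (\<gamma> t) < u (\<gamma> x) \<and> u (\<gamma> x) < u (\<gamma> s))"
proof -
  have "continuous_on {s..t} (u \<circ> \<gamma>)"
    using assms by (metis continuous_on_compose continuous_on_subset)
  moreover have "inj_on (u \<circ> \<gamma>) {s..t}"
    using assms by (meson comp_inj_on inj_on_subset)
  ultimately show ?thesis using continuous_inj_imp_mono[of s x t "u \<circ> \<gamma>"] assms by auto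
qed

locale sqh =
  fixes a b :: real and \<phi> \<psi> :: "real \<times> real \<Rightarrow> real \<times> real"
  assumes h: "homeomorphism (usq a b) (usq a b) \<phi> \<psi>"
    and v1: "\<phi> (a,b) = (a,b)" and v2: "\<phi> (a+1,b) = (a+1,b)"
    and v3: "\<phi> (a,b+1) = (a,b+1)" and v4: "\<phi> (a+1,b+1) = (a+1,b+1)"
begin

lemma inj: "inj_on \<phi> (usq a b)"
  using h by (metis homeomorphism_apply1 inj_on_inverseI)

lemma cont: "continuous_on (usq a b) \<phi>"
  using h by (simp add: homeomorphism_def)

lemma maps: "p \<in> usq a b \<Longrightarrow> \<phi> p \<in> usq a b"
  using h by (metis homeomorphism_image1 imageI)

lemma not_ab: "p \<in> usq a b \<Longrightarrow> p \<noteq> (a,b) \<Longrightarrow> \<phi> p \<noteq> (a,b)"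
  using inj v1 by (metis inj_onD left_add_mult_distrib mem_Sigma_iff usq_def atLeastAtMost_iff
       add_increasing2 order_refl zero_le_one)

lemma edgeR: assumes "y \<in> {b..b+1}" shows "fst (\<phi> (a+1, y)) = a+1"
proof -
  define \<gamma> where "\<gamma> = (\<lambda>y. \<phi> (a+1,y))"
  have sub: "(\<lambda>y. (a+1,y)) ` {b..b+1} \<subseteq> usq a b" by (auto simp: usq_def)
  have c: "continuous_on {b..b+1} \<gamma>" unfolding \<gamma>_def
    by (rule continuous_on_compose2[OF cont _ sub]) (auto intro!: continuous_intros)
  have i: "inj_on \<gamma> {b..b+1}" unfolding \<gamma>_def using inj sub
    by (auto simp: inj_on_def image_subset_iff)
  have D: "\<gamma> ` {b..b+1} \<subseteq> {p. bd2 a b p} - {(a,b)}"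
  proof
    fix q assume "q \<in> \<gamma> ` {b..b+1}"
    then obtain z where z: "z \<in> {b..b+1}" "q = \<phi> (a+1,z)" by (auto simp: \<gamma>_def)
    have "bd2 a b (a+1,z)" using z by (auto simp: bd2_def usq_def)
    then have "bd2 a b q" using bd_pres[OF h] z by simp
    moreover have "q \<noteq> (a,b)" using z not_ab[of "(a+1,z)"] by (auto simp: usq_def)
    ultimately show "q \<in> {p. bd2 a b p} - {(a,b)}" by simp
  qed
  show ?thesis
  proof (cases "y = b \<or> y = b+1")
    case True then show ?thesis using v2 v4 by auto
  next
    case False
    then have "b < y" "y < b+1" using assms by auto
    from arc[OF uu_cont uu_inj c i D this]
    have "1 < uu a b (\<gamma> y) \<and> uu a b (\<gamma> y) < 2"
      using v2 v4 by (auto simp: \<gamma>_def uu_def)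
    moreover have "\<gamma> y \<in> {p. bd2 a b p} - {(a,b)}" using D assms by (meson image_subset_iff)
    ultimately show ?thesis using uu_12[of a b "\<gamma> y"] by (auto simp: \<gamma>_def)
  qed
qed

lemma edgeT: assumes "x \<in> {a..a+1}" shows "snd (\<phi> (x, b+1)) = b+1"
proof -
  define \<gamma> where "\<gamma> = (\<lambda>x. \<phi> (x,b+1))"
  have sub: "(\<lambda>x. (x,b+1)) ` {a..a+1} \<subseteq> usq a b" by (auto simp: usq_def)
  have c: "continuous_on {a..a+1} \<gamma>" unfolding \<gamma>_def
    by (rule continuous_on_compose2[OF cont _ sub]) (auto intro!: continuous_intros)
  have i: "inj_on \<gamma> {a..a+1}" unfolding \<gamma>_def using inj sub
    by (auto simp: inj_on_def image_subset_iff)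
  have D: "\<gamma> ` {a..a+1} \<subseteq> {p. bd2 a b p} - {(a,b)}"
  proof
    fix q assume "q \<in> \<gamma> ` {a..a+1}"
    then obtain z where z: "z \<in> {a..a+1}" "q = \<phi> (z,b+1)" by (auto simp: \<gamma>_def)
    have "bd2 a b (z,b+1)" using z by (auto simp: bd2_def usq_def)
    then have "bd2 a b q" using bd_pres[OF h] z by simp
    moreover have "q \<noteq> (a,b)" using z not_ab[of "(z,b+1)"] by (auto simp: usq_def)
    ultimately show "q \<in> {p. bd2 a b p} - {(a,b)}" by simp
  qed
  show ?thesis
  proof (cases "x = a \<or> x = a+1")
    case True then show ?thesis using v3 v4 by auto
  next
    case False
    then have "a < x" "x < a+1" using assms by auto
    from arc[OF uu_cont uu_inj c i D this]
    have "2 < uu a b (\<gamma> x) \<and> uu a b (\<gamma> x) < 3"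
      using v3 v4 by (auto simp: \<gamma>_def uu_def)
    moreover have "\<gamma> x \<in> {p. bd2 a b p} - {(a,b)}" using D assms by (meson image_subset_iff)
    ultimately show ?thesis using uu_23[of a b "\<gamma> x"] by (auto simp: \<gamma>_def)
  qed
qed

end

definition Rf :: "real \<Rightarrow> real \<Rightarrow> real \<times> real \<Rightarrow> real \<times> real" where
  "Rf a b p = (2*a+1 - fst p, 2*b+1 - snd p)"

lemma Rf_Rf[simp]: "Rf a b (Rf a b p) = p" by (simp add: Rf_def)

lemma Rf_usq: "p \<in> usq a b \<Longrightarrow> Rf a b p \<in> usq a b"
  by (cases p) (auto simp: Rf_def usq_def)

lemma Rf_homeo: "homeomorphism (usq a b) (usq a b) (Rf a b) (Rf a b)"
  unfolding homeomorphism_def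
proof (intro conjI ballI)
  show "Rf a b ` usq a b = usq a b"
    using Rf_usq by (metis Rf_Rf image_eqI subsetI subset_antisym image_subsetI)
  then show "Rf a b ` usq a b = usq a b" .
qed (auto simp: Rf_def intro!: continuous_intros)

context sqh begin

lemma sym: "sqh a b \<psi> \<phi>"
proof -
  have e: "\<And>p. p \<in> usq a b \<Longrightarrow> \<psi> (\<phi> p) = p" using h by (simp add: homeomorphism_apply1)
  have m: "(a,b) \<in> usq a b" "(a+1,b) \<in> usq a b" "(a,b+1) \<in> usq a b" "(a+1,b+1) \<in> usq a b"
    by (auto simp: usq_def)
  show ?thesis
    using homeomorphism_symD[OF h] e[OF m(1)] e[OF m(2)] e[OF m(3)] e[OF m(4)] v1 v2 v3 v4
    by unfold_locales auto
qed

lemma refl: "sqh a b (Rf a b \<circ> \<phi> \<circ> Rf a b) (Rf a b \<circ> \<psi> \<circ> Rf a b)"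
proof
  show "homeomorphism (usq a b) (usq a b) (Rf a b \<circ> \<phi> \<circ> Rf a b) (Rf a b \<circ> \<psi> \<circ> Rf a b)"
    using homeomorphism_compose[OF homeomorphism_compose[OF Rf_homeo h] Rf_homeo]
    by (simp add: o_assoc)
qed (auto simp: Rf_def v1 v2 v3 v4)

lemma edgeL: assumes "y \<in> {b..b+1}" shows "fst (\<phi> (a, y)) = a"
proof -
  have "2*b+1-y \<in> {b..b+1}" using assms by auto
  from sqh.edgeR[OF refl this] show ?thesis by (simp add: Rf_def)
qed

lemma edgeB: assumes "x \<in> {a..a+1}" shows "snd (\<phi> (x, b)) = b"
proof -
  have "2*a+1-x \<in> {a..a+1}" using assms by auto
  from sqh.edgeT[OF refl this] show ?thesis by (simp add: Rf_def)
qed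

end

lemma mono_edge:
  fixes h :: "real \<Rightarrow> real"
  assumes c: "continuous_on {\<alpha>..\<alpha>+1} h" and i: "inj_on h {\<alpha>..\<alpha>+1}"
    and h0: "h \<alpha> = \<alpha>" and h1: "h (\<alpha>+1) = \<alpha>+1"
    and s: "\<alpha> \<le> s" "s \<le> s'" "s' \<le> \<alpha>+1"
  shows "h s \<le> h s'"
proof -
  have gt: "h z > \<alpha>" if "\<alpha> < z" "z \<le> \<alpha>+1" for z
  proof (cases "z = \<alpha>+1")
    case True then show ?thesis using h1 by simp
  next
    case False
    then show ?thesis using continuous_inj_imp_mono[OF _ _ c i, of z] that h0 h1 by auto
  qed
  show ?thesis
  proof (cases "s = s' \<or> s = \<alpha>")
    case True then show ?thesis using gt h0 s by (cases "s = s'") (auto intro: less_imp_le)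
  next
    case False
    then have "\<alpha> < s" "s < s'" using s by auto
    have "continuous_on {\<alpha>..s'} h" using c s by (auto intro: continuous_on_subset)
    moreover have "inj_on h {\<alpha>..s'}" using i s by (auto intro: inj_on_subset)
    ultimately have "(h \<alpha> < h s \<and> h s < h s') \<or> (h s' < h s \<and> h s < h \<alpha>)"
      using continuous_inj_imp_mono[of \<alpha> s s' h] \<open>\<alpha> < s\<close> \<open>s < s'\<close> by auto
    then show ?thesis using gt[of s'] gt[of s] s h0 \<open>\<alpha> < s\<close> \<open>s < s'\<close> by auto
  qed
qed

definition good_edge :: "real \<Rightarrow> (real \<Rightarrow> real) \<Rightarrow> real \<Rightarrow> real \<Rightarrow> bool" where
  "good_edge \<alpha> h \<delta> K \<longleftrightarrow> 0 < \<delta> \<and> \<delta> \<le> 1 \<and> 1 \<le> K \<and> h \<alpha> = \<alpha> \<and> h (\<alpha>+1) = \<alpha>+1 \<and>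
     (\<forall>s s'. \<alpha> \<le> s \<longrightarrow> s \<le> s' \<longrightarrow> s' \<le> \<alpha>+1 \<longrightarrow> \<delta>*(s'-s) \<le> h s' - h s \<and> h s' - h s \<le> K*(s'-s))"

definition interp :: "(real \<Rightarrow> real) \<Rightarrow> real \<Rightarrow> real \<Rightarrow> real" where
  "interp h s t = (1 - t) * s + t * (h s)"

context
  fixes \<alpha> \<delta> K :: real and h :: "real \<Rightarrow> real"
  assumes g: "good_edge \<alpha> h \<delta> K"
begin

lemma ge_basic: "0 < \<delta>" "\<delta> \<le> 1" "1 \<le> K" "h \<alpha> = \<alpha>" "h (\<alpha>+1) = \<alpha>+1"
  using g by (auto simp: good_edge_def)

lemma ge_ord: "\<alpha> \<le> s \<Longrightarrow> s \<le> s' \<Longrightarrow> s' \<le> \<alpha>+1 \<Longrightarrow> \<delta>*(s'-s) \<le> h s' - h s \<and> h s' - h s \<le> K*(s'-s)"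
  using g by (auto simp: good_edge_def)

lemma ge_range: assumes "s \<in> {\<alpha>..\<alpha>+1}" shows "h s \<in> {\<alpha>..\<alpha>+1}"
proof -
  have "\<delta>*(s-\<alpha>) \<le> h s - h \<alpha>" "\<delta>*(\<alpha>+1-s) \<le> h (\<alpha>+1) - h s"
    using ge_ord[of \<alpha> s] ge_ord[of s "\<alpha>+1"] assms by auto
  moreover have "0 \<le> \<delta>*(s-\<alpha>)" "0 \<le> \<delta>*(\<alpha>+1-s)" using assms ge_basic by auto
  ultimately show ?thesis using ge_basic by auto
qed

lemma ge_abs: assumes "s \<in> {\<alpha>..\<alpha>+1}" "s' \<in> {\<alpha>..\<alpha>+1}"
  shows "\<delta>*\<bar>s-s'\<bar> \<le> \<bar>h s - h s'\<bar> \<and> \<bar>h s - h s'\<bar> \<le> K*\<bar>s-s'\<bar>"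
proof (cases "s \<le> s'")
  case True
  then have o: "\<delta>*(s'-s) \<le> h s' - h s" "h s' - h s \<le> K*(s'-s)" using ge_ord[of s s'] assms by auto
  have "0 \<le> \<delta>*(s'-s)" using True ge_basic by simp
  then have "\<bar>h s - h s'\<bar> = h s' - h s" "\<bar>s-s'\<bar> = s' - s" using o True by auto
  then show ?thesis using o by simp
next
  case False
  then have o: "\<delta>*(s-s') \<le> h s - h s'" "h s - h s' \<le> K*(s-s')" using ge_ord[of s' s] assms by auto
  have "0 \<le> \<delta>*(s-s')" using False ge_basic by simp
  then have "\<bar>h s - h s'\<bar> = h s - h s'" "\<bar>s-s'\<bar> = s - s'" using o False by auto
  then show ?thesis using o by simp
qed

lemma interp_range: assumes "s \<in> {\<alpha>..\<alpha>+1}" "t \<in> {0..1}" shows "interp h s t \<in> {\<alpha>..\<alpha>+1}"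
proof -
  have hs: "h s \<in> {\<alpha>..\<alpha>+1}" using ge_range assms by auto
  have t: "0 \<le> t" "0 \<le> 1 - t" using assms by auto
  have "(1 - t) * \<alpha> \<le> (1 - t) * s" "t * \<alpha> \<le> t * h s" "(1 - t) * s \<le> (1 - t) * (\<alpha> + 1)" "t * h s \<le> t * (\<alpha> + 1)"
    using hs assms t by (intro mult_left_mono; simp)+
  then show ?thesis unfolding interp_def by (auto simp: algebra_simps)
qed

lemma interp_up: assumes "s \<in> {\<alpha>..\<alpha>+1}" "s' \<in> {\<alpha>..\<alpha>+1}" "t \<in> {0..1}" "t' \<in> {0..1}"
  shows "\<bar>interp h s t - interp h s' t'\<bar> \<le> (K+2)*\<bar>s-s'\<bar> + \<bar>t-t'\<bar>"
proof -
  have e: "interp h s t - interp h s' t' = (s - s') + t*((h s - h s') - (s - s')) + (t - t')*(h s' - s')"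
    by (simp add: interp_def algebra_simps)
  have "\<bar>t*((h s - h s') - (s - s'))\<bar> \<le> \<bar>(h s - h s') - (s - s')\<bar>"
    using assms by (simp add: abs_mult mult_left_le_one_le)
  also have "\<dots> \<le> \<bar>h s - h s'\<bar> + \<bar>s - s'\<bar>" by (rule abs_triangle_ineq4)
  also have "\<dots> \<le> K*\<bar>s-s'\<bar> + \<bar>s - s'\<bar>" using conjunct2[OF ge_abs[OF assms(1,2)]] by simp
  also have "\<dots> = (K+1)*\<bar>s-s'\<bar>" by (simp add: algebra_simps)
  finally have 1: "\<bar>t*((h s - h s') - (s - s'))\<bar> \<le> (K+1)*\<bar>s-s'\<bar>" .
  have "\<bar>h s' - s'\<bar> \<le> 1" using ge_range[OF assms(2)] assms by auto
  then have 2: "\<bar>(t - t')*(h s' - s')\<bar> \<le> \<bar>t-t'\<bar>"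
    by (simp add: abs_mult mult_right_le_one_le)
  have 3: "(K+2)*\<bar>s-s'\<bar> = (K+1)*\<bar>s-s'\<bar> + \<bar>s-s'\<bar>" by (simp add: algebra_simps)
  show ?thesis unfolding e using 1 2 3 abs_triangle_ineq[of "s - s' + t*((h s - h s') - (s - s'))" "(t - t')*(h s' - s')"]
     abs_triangle_ineq[of "s - s'" "t*((h s - h s') - (s - s'))"] by linarith
qed

lemma interp_low: assumes "s \<in> {\<alpha>..\<alpha>+1}" "s' \<in> {\<alpha>..\<alpha>+1}" "t \<in> {0..1}" "t' \<in> {0..1}"
  shows "\<delta>*\<bar>s-s'\<bar> - \<bar>t-t'\<bar> \<le> \<bar>interp h s t - interp h s' t'\<bar>"
proof -
  have e: "interp h s t - interp h s' t' = ((1-t)*(s - s') + t*(h s - h s')) + (t - t')*(h s' - s')"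
    by (simp add: interp_def algebra_simps)
  have b: "\<delta>*\<bar>s-s'\<bar> \<le> \<bar>(1-t)*(s - s') + t*(h s - h s')\<bar>"
  proof (cases "s \<le> s'")
    case True
    have o: "\<delta>*(s'-s) \<le> h s' - h s" using ge_ord[of s s'] True assms by auto
    have "(1-t)*(\<delta>*(s'-s)) \<le> (1-t)*(s'-s)" using assms ge_basic True
      by (intro mult_left_mono) (auto intro: mult_left_le_one_le)
    moreover have "t*(\<delta>*(s'-s)) \<le> t*(h s' - h s)" using o assms by (intro mult_left_mono) auto
    ultimately have "\<delta>*(s'-s) \<le> (1-t)*(s' - s) + t*(h s' - h s)" by (simp add: algebra_simps)
    moreover have "(1 - t)*(s - s') + t*(h s - h s') = -((1-t)*(s'-s) + t*(h s' - h s))"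
      by (simp add: algebra_simps)
    ultimately show ?thesis using True by (smt (verit))
  next
    case False
    have o: "\<delta>*(s-s') \<le> h s - h s'" using ge_ord[of s' s] False assms by auto
    have "(1-t)*(\<delta>*(s-s')) \<le> (1-t)*(s-s')" using assms ge_basic False
      by (intro mult_left_mono) (auto intro: mult_left_le_one_le)
    moreover have "t*(\<delta>*(s-s')) \<le> t*(h s - h s')" using o assms by (intro mult_left_mono) auto
    ultimately have "\<delta>*(s-s') \<le> (1-t)*(s - s') + t*(h s - h s')" by (simp add: algebra_simps)
    then show ?thesis using False by (smt (verit))
  qed
  have "\<bar>h s' - s'\<bar> \<le> 1" using ge_range[OF assms(2)] assms by auto
  then have 2: "\<bar>(t - t')*(h s' - s')\<bar> \<le> \<bar>t-t'\<bar>"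
    by (simp add: abs_mult mult_right_le_one_le)
  show ?thesis unfolding e using b 2 by (smt (verit))
qed

lemma interp_0: "interp h s 0 = s" and interp_1: "interp h s 1 = h s" by (simp_all add: interp_def)
lemma interp_a: "interp h \<alpha> t = \<alpha>" and interp_a1: "interp h (\<alpha>+1) t = \<alpha>+1"
  using ge_basic by (simp_all add: interp_def algebra_simps)

lemma interp_inj: assumes "s \<in> {\<alpha>..\<alpha>+1}" "s' \<in> {\<alpha>..\<alpha>+1}" "t \<in> {0..1}" "interp h s t = interp h s' t"
  shows "s = s'"
  using interp_low[OF assms(1,2,3,3)] assms(4) ge_basic by (auto simp: mult_le_0_iff)

lemma interp_cont: assumes "t \<in> {0..1}" shows "continuous_on {\<alpha>..\<alpha>+1} (\<lambda>s. interp h s t)"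
proof -
  have "((K+2)*1)-lipschitz_on {\<alpha>..\<alpha>+1} (\<lambda>s. interp h s t)"
    using interp_up[of _ _ t t] assms ge_basic by (intro lipschitz_onI) (auto simp: dist_real_def)
  then show ?thesis by (rule lipschitz_on_continuous_on)
qed

lemma interp_surj: assumes "t \<in> {0..1}" "q \<in> {\<alpha>..\<alpha>+1}" shows "\<exists>s\<in>{\<alpha>..\<alpha>+1}. interp h s t = q"
  using IVT'[of "\<lambda>s. interp h s t" \<alpha> q "\<alpha>+1", OF _ _ _ interp_cont[OF assms(1)]] assms interp_a interp_a1
  by auto

end

type_synonym p3 = "(real \<times> real) \<times> real"

definition NN :: "p3 \<Rightarrow> real" where
  "NN v = 2 * max \<bar>fst (fst v)\<bar> (max \<bar>snd (fst v)\<bar> \<bar>snd v\<bar>)"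

definition cone :: "p3 \<Rightarrow> (p3 \<Rightarrow> p3) \<Rightarrow> p3 \<Rightarrow> p3" where
  "cone c f z = c + NN (z - c) *\<^sub>R (f (c + (1 / NN (z - c)) *\<^sub>R (z - c)) - c)"

lemma NN_0[simp]: "NN 0 = 0" by (simp add: NN_def)

lemma NN_nonneg: "0 \<le> NN v" by (simp add: NN_def)

lemma NN_scale: "NN (s *\<^sub>R v) = \<bar>s\<bar> * NN v"
proof -
  obtain x y t where v: "v = ((x,y),t)" by (metis prod.collapse)
  have "max (\<bar>s\<bar>*\<bar>x\<bar>) (max (\<bar>s\<bar>*\<bar>y\<bar>) (\<bar>s\<bar>*\<bar>t\<bar>)) = \<bar>s\<bar> * max \<bar>x\<bar> (max \<bar>y\<bar> \<bar>t\<bar>)"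
    by (simp add: max_mult_distrib_left)
  then show ?thesis by (simp add: NN_def v abs_mult)
qed

lemma NN_zero: "NN v = 0 \<longleftrightarrow> v = 0"
  by (cases v) (auto simp: NN_def max_def zero_prod_def split: if_splits)

lemma norm3_ge: "\<bar>fst (fst v)\<bar> \<le> norm v" "\<bar>snd (fst v)\<bar> \<le> norm v" "\<bar>snd v\<bar> \<le> norm v"
proof -
  obtain x y t where v: "v = ((x,y),t)" by (metis prod.collapse)
  have n: "norm v = sqrt ((sqrt (x\<^sup>2 + y\<^sup>2))\<^sup>2 + t\<^sup>2)" by (simp add: v norm_Pair)
  have "\<bar>x\<bar> \<le> sqrt (x\<^sup>2 + y\<^sup>2)" "\<bar>y\<bar> \<le> sqrt (x\<^sup>2 + y\<^sup>2)"
    by (simp_all add: real_sqrt_sum_squares_ge1 real_sqrt_sum_squares_ge2 flip: real_sqrt_abs)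
  moreover have "sqrt (x\<^sup>2 + y\<^sup>2) \<le> norm v" "\<bar>t\<bar> \<le> norm v"
    unfolding n by (simp_all add: real_sqrt_sum_squares_ge1 real_sqrt_sum_squares_ge2 flip: real_sqrt_abs)
  ultimately show "\<bar>fst (fst v)\<bar> \<le> norm v" "\<bar>snd (fst v)\<bar> \<le> norm v" "\<bar>snd v\<bar> \<le> norm v"
    unfolding v fst_conv snd_conv by linarith+
qed

lemma norm3_le: "norm v \<le> \<bar>fst (fst v)\<bar> + \<bar>snd (fst v)\<bar> + \<bar>snd v\<bar>"
proof -
  obtain x y t where v: "v = ((x,y),t)" by (metis prod.collapse)
  have "norm v \<le> norm (x,y) + \<bar>t\<bar>" unfolding v using norm_Pair_le[of "(x,y)" t] by simp
  moreover have "norm (x,y) \<le> \<bar>x\<bar> + \<bar>y\<bar>" using norm_Pair_le[of x y] by simp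
  ultimately show ?thesis by (simp add: v)
qed

lemma norm_le_NN: "norm v \<le> 3/2 * NN v"
  using norm3_le[of v] by (simp add: NN_def)

lemma NN_lip: "\<bar>NN v - NN w\<bar> \<le> 6 * norm (v - w)"
proof -
  have mx: "\<And>A B A' B'::real. \<bar>max A B - max A' B'\<bar> \<le> \<bar>A - A'\<bar> + \<bar>B - B'\<bar>"
    by (cases "A \<le> B"; cases "A' \<le> B'") (simp_all add: max_def; linarith)+
  have ab: "\<And>A A'::real. \<bar>\<bar>A\<bar> - \<bar>A'\<bar>\<bar> \<le> \<bar>A - A'\<bar>" by (rule abs_triangle_ineq3)
  obtain x y t where v: "v = ((x,y),t)" by (metis prod.collapse)
  obtain x' y' t' where w: "w = ((x',y'),t')" by (metis prod.collapse)
  have M: "\<bar>max \<bar>x\<bar> (max \<bar>y\<bar> \<bar>t\<bar>) - max \<bar>x'\<bar> (max \<bar>y'\<bar> \<bar>t'\<bar>)\<bar> \<le> \<bar>x - x'\<bar> + \<bar>y - y'\<bar> + \<bar>t - t'\<bar>"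
    using mx[of "\<bar>x\<bar>" "max \<bar>y\<bar> \<bar>t\<bar>" "\<bar>x'\<bar>" "max \<bar>y'\<bar> \<bar>t'\<bar>"] mx[of "\<bar>y\<bar>" "\<bar>t\<bar>" "\<bar>y'\<bar>" "\<bar>t'\<bar>"]
      ab[of x x'] ab[of y y'] ab[of t t'] by linarith
  moreover have "\<bar>NN v - NN w\<bar> = 2 * \<bar>max \<bar>x\<bar> (max \<bar>y\<bar> \<bar>t\<bar>) - max \<bar>x'\<bar> (max \<bar>y'\<bar> \<bar>t'\<bar>)\<bar>"
  proof -
    have "NN v - NN w = 2 * (max \<bar>x\<bar> (max \<bar>y\<bar> \<bar>t\<bar>) - max \<bar>x'\<bar> (max \<bar>y'\<bar> \<bar>t'\<bar>))"
      by (simp add: NN_def v w right_diff_distrib)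
    then show ?thesis by (simp only: abs_mult abs_numeral)
  qed
  moreover have "fst (fst (v - w)) = x - x'" "snd (fst (v - w)) = y - y'" "snd (v - w) = t - t'"
    by (simp_all add: v w)
  ultimately have "\<bar>NN v - NN w\<bar> \<le> 2 * (\<bar>fst (fst (v - w))\<bar> + \<bar>snd (fst (v - w))\<bar> + \<bar>snd (v - w)\<bar>)"
    using mult_left_mono[OF M, of 2] by (simp only:)
  then show ?thesis using norm3_ge[of "v - w"] by argo
qed

lemma cone_inv:
  assumes "\<And>p. NN (p - c) = 1 \<Longrightarrow> NN (f p - c) = 1 \<and> g (f p) = p"
  shows "cone c g (cone c f z) = z" "NN (cone c f z - c) = NN (z - c)"
proof -
  define s where "s = NN (z - c)"
  define u where "u = c + (1 / s) *\<^sub>R (z - c)"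
  have "cone c g (cone c f z) = z \<and> NN (cone c f z - c) = NN (z - c)"
  proof (cases "s = 0")
    case True
    then have "z = c" using NN_zero[of "z - c"] by (simp add: s_def)
    then show ?thesis by (simp add: cone_def NN_zero)
  next
    case False
    then have sp: "s > 0" using NN_nonneg[of "z - c"] by (simp add: s_def)
    have "u - c = (1/s) *\<^sub>R (z - c)" by (simp add: u_def)
    then have Nu: "NN (u - c) = 1" using sp by (simp add: NN_scale s_def)
    then have fu: "NN (f u - c) = 1" "g (f u) = u" using assms by auto
    have cf: "cone c f z = c + s *\<^sub>R (f u - c)" by (simp add: cone_def s_def u_def)
    have N2: "NN (cone c f z - c) = s" using cf fu sp by (simp add: NN_scale)
    have "c + (1 / s) *\<^sub>R (cone c f z - c) = f u" using cf sp by simp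
    then have "cone c g (cone c f z) = c + s *\<^sub>R (g (f u) - c)" unfolding cone_def[of c g] N2 by simp
    also have "\<dots> = z" using fu sp by (simp add: u_def)
    finally show ?thesis using N2 by (simp add: s_def)
  qed
  then show "cone c g (cone c f z) = z" "NN (cone c f z - c) = NN (z - c)" by auto
qed

lemma cone_bd: "NN (z - c) = 1 \<Longrightarrow> cone c f z = f z"
  by (simp add: cone_def)


lemma glue:
  fixes F :: "'a::real_normed_vector \<Rightarrow> 'b::metric_space"
  assumes cS: "convex S" and fI: "finite I" and cl: "\<And>i. i \<in> I \<Longrightarrow> closed (P i)"
    and cov: "S \<subseteq> (\<Union>i\<in>I. P i)" and lip: "\<And>i. i \<in> I \<Longrightarrow> L-lipschitz_on (P i \<inter> S) F"
    and L: "L \<ge> 0"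
  shows "L-lipschitz_on S F"
proof (rule lipschitz_onI[OF _ L])
  fix z w assume z: "z \<in> S" and w: "w \<in> S"
  define \<gamma> where "\<gamma> = (\<lambda>\<tau>::real. z + \<tau> *\<^sub>R (w - z))"
  define U where "U = (\<lambda>i. {0..1} \<inter> \<gamma> -` P i)"
  have gS: "\<gamma> \<tau> \<in> S" if "\<tau> \<in> {0..1}" for \<tau>
  proof -
    have "\<gamma> \<tau> = (1 - \<tau>) *\<^sub>R z + \<tau> *\<^sub>R w" by (simp add: \<gamma>_def algebra_simps)
    then show ?thesis using cS z w that by (auto simp: convex_alt)
  qed
  have clU: "closed (U i)" if "i \<in> I" for i
    unfolding U_def
    by (intro closed_Int closed_real_atLeastAtMost continuous_closed_vimage cl[OF that])
       (auto simp: \<gamma>_def intro!: continuous_intros)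
  have lipU: "(L * dist z w)-lipschitz_on (U i) (F \<circ> \<gamma>)" if "i \<in> I" for i
  proof (rule lipschitz_onI)
    fix x y assume "x \<in> U i" "y \<in> U i"
    then have "\<gamma> x \<in> P i \<inter> S" "\<gamma> y \<in> P i \<inter> S" using gS by (auto simp: U_def)
    then have "dist (F (\<gamma> x)) (F (\<gamma> y)) \<le> L * dist (\<gamma> x) (\<gamma> y)"
      using lipschitz_onD[OF lip[OF that]] by blast
    also have "dist (\<gamma> x) (\<gamma> y) = dist x y * dist z w"
    proof -
      have "\<gamma> x - \<gamma> y = (x - y) *\<^sub>R (w - z)" by (simp add: \<gamma>_def algebra_simps)
      then show ?thesis by (simp add: dist_norm dist_real_def norm_minus_commute)
    qed
    finally show "dist ((F \<circ> \<gamma>) x) ((F \<circ> \<gamma>) y) \<le> L * dist z w * dist x y" by (simp add: ac_simps)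
  qed (use L in simp)
  have "{0..1} \<subseteq> (\<Union>i\<in>I. U i)"
  proof
    fix \<tau> :: real assume "\<tau> \<in> {0..1}"
    then show "\<tau> \<in> (\<Union>i\<in>I. U i)" using gS[of \<tau>] cov by (auto simp: U_def)
  qed
  then have "(L * dist z w)-lipschitz_on {0..1} (F \<circ> \<gamma>)"
    using lipschitz_on_closed_Union[of I "L * dist z w" U "F \<circ> \<gamma>" 0 1] lipU clU fI L by auto
  from lipschitz_onD[OF this, of 0 1] show "dist (F z) (F w) \<le> L * dist z w"
    by (simp add: \<gamma>_def)
qed

lemma cone_c: "cone c f c = c" by (simp add: cone_def)

lemma cone_lip:
  fixes f :: "p3 \<Rightarrow> p3"
  assumes A: "\<And>z. z \<in> P \<Longrightarrow> NN (z - c) > 0 \<Longrightarrow> c + (1 / NN (z - c)) *\<^sub>R (z - c) \<in> A"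
    and L: "K-lipschitz_on A f"
    and Af: "\<And>p. p \<in> A \<Longrightarrow> NN (p - c) = 1 \<and> NN (f p - c) = 1"
  shows "(K + 10 * (K + 1))-lipschitz_on P (cone c f)"
proof -
  have K: "K \<ge> 0" using lipschitz_on_nonneg[OF L] .
  have nb: "norm (p - c) \<le> 3/2" "norm (f p - c) \<le> 3/2" if "p \<in> A" for p
    using Af[OF that] norm_le_NN[of "p - c"] norm_le_NN[of "f p - c"] by auto
  have half: "dist (cone c f z) c \<le> 9 * dist z w" if z: "z \<in> P" and w0: "NN (w - c) = 0" for z w
  proof (cases "NN (z - c) = 0")
    case True then show ?thesis by (simp add: cone_def)
  next
    case False
    define s where "s = NN (z - c)"
    have sp: "s > 0" using False NN_nonneg[of "z - c"] by (simp add: s_def)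
    define u where "u = c + (1 / s) *\<^sub>R (z - c)"
    have uA: "u \<in> A" using A[OF z] sp by (simp add: u_def s_def)
    have "dist (cone c f z) c = norm (s *\<^sub>R (f u - c))" by (simp add: cone_def dist_norm s_def u_def)
    also have "\<dots> = s * norm (f u - c)" using sp by simp
    also have "\<dots> \<le> s * (3/2)" using nb[OF uA] sp by (intro mult_left_mono) auto
    also have "s \<le> 6 * dist z w"
      using NN_lip[of "z - c" "w - c"] w0 by (simp add: s_def dist_norm)
    then have "s * (3/2) \<le> 9 * dist z w" by simp
    finally show ?thesis .
  qed
  show ?thesis
  proof (rule lipschitz_onI)
    show "0 \<le> K + 10 * (K + 1)" using K by simp
    fix z w assume z: "z \<in> P" and w: "w \<in> P"
    define s where "s = NN (z - c)"
    define r where "r = NN (w - c)"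
    have dd: "0 \<le> dist z w" by simp
    have sr: "\<bar>s - r\<bar> \<le> 6 * dist z w"
      using NN_lip[of "z - c" "w - c"] by (simp add: s_def r_def dist_norm)
    have K9: "9 * dist z w \<le> (K + 10 * (K + 1)) * dist z w"
      using K dd by (intro mult_right_mono) auto
    consider "r = 0" | "s = 0" | "s > 0 \<and> r > 0"
      using NN_nonneg[of "z - c"] NN_nonneg[of "w - c"] by (force simp: s_def r_def)
    then show "dist (cone c f z) (cone c f w) \<le> (K + 10 * (K + 1)) * dist z w"
    proof cases
      case 1
      then have "w = c" using NN_zero[of "w - c"] by (simp add: r_def)
      then show ?thesis using half[OF z, of w] 1 K9 by (simp add: r_def cone_c)
    next
      case 2
      then have "z = c" using NN_zero[of "z - c"] by (simp add: s_def)
      then show ?thesis using half[OF w, of z] 2 K9 by (simp add: s_def cone_c dist_commute)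
    next
      case 3
      then have sp: "s > 0" and rp: "r > 0" by auto
      define u where "u = c + (1 / s) *\<^sub>R (z - c)"
      define v where "v = c + (1 / r) *\<^sub>R (w - c)"
      have uA: "u \<in> A" using A[OF z] sp by (simp add: u_def s_def)
      have vA: "v \<in> A" using A[OF w] rp by (simp add: v_def r_def)
      have e1: "cone c f z - cone c f w = s *\<^sub>R (f u - f v) + (s - r) *\<^sub>R (f v - c)"
        by (simp add: cone_def s_def r_def u_def v_def algebra_simps)
      have e2a: "s *\<^sub>R (u - v) = (z - c) - (s / r) *\<^sub>R (w - c)"
        using sp by (simp add: u_def v_def algebra_simps)
      have sr1: "s / r = 1 - (r - s) / r" using rp by (simp add: field_simps)
      have e2: "s *\<^sub>R (u - v) = (z - w) + ((r - s) / r) *\<^sub>R (w - c)"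
        unfolding e2a sr1 by (simp add: scaleR_diff_left algebra_simps)
      have e3: "norm (w - c) = r * norm (v - c)" using rp by (simp add: v_def)
      have "s * norm (u - v) = norm (s *\<^sub>R (u - v))" using sp by simp
      also have "\<dots> \<le> norm (z - w) + norm (((r - s) / r) *\<^sub>R (w - c))"
        unfolding e2 by (rule norm_triangle_ineq)
      also have "norm (((r - s) / r) *\<^sub>R (w - c)) = \<bar>r - s\<bar> * norm (v - c)"
        using rp e3 by simp
      also have "\<bar>r - s\<bar> * norm (v - c) \<le> \<bar>r - s\<bar> * (3/2)"
        using nb[OF vA] by (intro mult_left_mono) auto
      finally have uv: "s * norm (u - v) \<le> dist z w + \<bar>s - r\<bar> * (3/2)"
        by (simp add: dist_norm abs_minus_commute)
      have "dist (cone c f z) (cone c f w) = norm (s *\<^sub>R (f u - f v) + (s - r) *\<^sub>R (f v - c))"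
        by (simp add: dist_norm e1)
      also have "\<dots> \<le> s * norm (f u - f v) + \<bar>s - r\<bar> * norm (f v - c)"
        using norm_triangle_ineq[of "s *\<^sub>R (f u - f v)" "(s - r) *\<^sub>R (f v - c)"] sp by simp
      also have "s * norm (f u - f v) \<le> s * (K * norm (u - v))"
        using lipschitz_onD[OF L uA vA] sp by (intro mult_left_mono) (auto simp: dist_norm)
      also have "\<bar>s - r\<bar> * norm (f v - c) \<le> \<bar>s - r\<bar> * (3/2)"
        using nb[OF vA] by (intro mult_left_mono) auto
      also have "s * (K * norm (u - v)) = K * (s * norm (u - v))" by simp
      also have "K * (s * norm (u - v)) \<le> K * (dist z w + \<bar>s - r\<bar> * (3/2))"
        using uv K by (intro mult_left_mono) auto
      finally have "dist (cone c f z) (cone c f w) \<le> K * dist z w + (K + 1) * (\<bar>s - r\<bar> * (3/2))"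
        by (simp add: algebra_simps add_divide_distrib)
      also have "(K + 1) * (\<bar>s - r\<bar> * (3/2)) \<le> (K + 1) * (9 * dist z w)"
        using sr K by (intro mult_left_mono) auto
      also have "K * dist z w + (K + 1) * (9 * dist z w) \<le> (K + 10 * (K + 1)) * dist z w"
        using K dd by (simp add: algebra_simps)
      finally show ?thesis by simp
    qed
  qed
qed

definition cc :: "real \<Rightarrow> real \<Rightarrow> p3" where
  "cc a b = ((a + 1/2, b + 1/2), 1/2)"

definition axc :: "nat \<Rightarrow> real" where "axc k = (if k = 2 then 2 else if k = 3 then -2 else 0)"
definition ayc :: "nat \<Rightarrow> real" where "ayc k = (if k = 4 then -2 else if k = 5 then 2 else 0)"
definition atc :: "nat \<Rightarrow> real" where "atc k = (if k = 0 then -2 else if k = 1 then 2 else 0)"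

definition lr :: "nat \<Rightarrow> p3 \<Rightarrow> real" where
  "lr k v = axc k * fst (fst v) + ayc k * snd (fst v) + atc k * snd v"

definition face :: "real \<Rightarrow> real \<Rightarrow> nat \<Rightarrow> p3 set" where
  "face a b k = {p. NN (p - cc a b) = 1 \<and> lr k (p - cc a b) = 1}"

definition pyr :: "real \<Rightarrow> real \<Rightarrow> nat \<Rightarrow> p3 set" where
  "pyr a b k = {z. NN (z - cc a b) \<le> 1 \<and> NN (z - cc a b) = lr k (z - cc a b)}"

definition cnd :: "real \<Rightarrow> real \<Rightarrow> nat \<Rightarrow> p3 \<Rightarrow> bool" where
  "cnd a b k p = (if k = 0 then snd p = 0 else if k = 1 then snd p = 1
     else if k = 2 then fst (fst p) = a+1 else if k = 3 then fst (fst p) = a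
     else if k = 4 then snd (fst p) = b else if k = 5 then snd (fst p) = b+1 else False)"

lemma NN_cc: "NN (((x,y),t) - cc a b) = 2 * max \<bar>x - a - 1/2\<bar> (max \<bar>y - b - 1/2\<bar> \<bar>t - 1/2\<bar>)"
  by (simp add: NN_def cc_def algebra_simps)

lemma two_max: "2 * max A (max B C) \<le> (1::real) \<longleftrightarrow> A \<le> 1/2 \<and> B \<le> 1/2 \<and> C \<le> 1/2"
  by (cases "A \<le> max B C"; cases "B \<le> C") (auto simp: max_def)

lemma Q_NN: "p \<in> usq a b \<times> {0..1} \<longleftrightarrow> NN (p - cc a b) \<le> 1"
proof -
  obtain x y t where p: "p = ((x,y),t)" by (metis prod.collapse)
  have "NN (p - cc a b) \<le> 1 \<longleftrightarrow> \<bar>x - a - 1/2\<bar> \<le> 1/2 \<and> \<bar>y - b - 1/2\<bar> \<le> 1/2 \<and> \<bar>t - 1/2\<bar> \<le> 1/2"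
    unfolding p NN_cc by (rule two_max)
  also have "\<dots> \<longleftrightarrow> p \<in> usq a b \<times> {0..1}"
    unfolding p usq_def abs_le_iff by auto
  finally show ?thesis by simp
qed

lemma lr_scale: "lr k (s *\<^sub>R v) = s * lr k v"
  by (simp add: lr_def algebra_simps)

lemma lr_le: "lr k v \<le> NN v"
proof -
  define M where "M = max \<bar>fst (fst v)\<bar> (max \<bar>snd (fst v)\<bar> \<bar>snd v\<bar>)"
  have m: "\<bar>fst (fst v)\<bar> \<le> M" "\<bar>snd (fst v)\<bar> \<le> M" "\<bar>snd v\<bar> \<le> M" by (auto simp: M_def)
  have N: "NN v = 2 * M" by (simp add: NN_def M_def)
  show ?thesis unfolding N lr_def axc_def ayc_def atc_def using m by (simp add: abs_le_iff)
qed

lemma NN_some: "\<exists>k<6. NN v = lr k v"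
proof -
  define x where "x = fst (fst v)"
  define y where "y = snd (fst v)"
  define t where "t = snd v"
  have N: "NN v = 2 * max \<bar>x\<bar> (max \<bar>y\<bar> \<bar>t\<bar>)" by (simp add: NN_def x_def y_def t_def)
  have l: "lr 0 v = -2*t" "lr 1 v = 2*t" "lr 2 v = 2*x" "lr 3 v = -2*x" "lr 4 v = -2*y" "lr 5 v = 2*y"
    by (simp_all add: lr_def axc_def ayc_def atc_def x_def y_def t_def)
  consider "max \<bar>x\<bar> (max \<bar>y\<bar> \<bar>t\<bar>) = \<bar>x\<bar>" | "max \<bar>x\<bar> (max \<bar>y\<bar> \<bar>t\<bar>) = \<bar>y\<bar>"
    | "max \<bar>x\<bar> (max \<bar>y\<bar> \<bar>t\<bar>) = \<bar>t\<bar>"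
    by (cases "\<bar>x\<bar> \<le> max \<bar>y\<bar> \<bar>t\<bar>"; cases "\<bar>y\<bar> \<le> \<bar>t\<bar>") (auto simp: max_def)
  then show ?thesis
  proof cases
    case 1 then show ?thesis unfolding N using l by (cases "x \<ge> 0") (rule exI[of _ 2], simp, rule exI[of _ 3], simp)
  next
    case 2 then show ?thesis unfolding N using l by (cases "y \<ge> 0") (rule exI[of _ 5], simp, rule exI[of _ 4], simp)
  next
    case 3 then show ?thesis unfolding N using l by (cases "t \<ge> 0") (rule exI[of _ 1], simp, rule exI[of _ 0], simp)
  qed
qed

lemma lr_cnd: "lr k (p - cc a b) = 1 \<longleftrightarrow> cnd a b k p"
  by (simp add: lr_def axc_def ayc_def atc_def cnd_def cc_def) (auto simp: algebra_simps)

lemma face_char: "p \<in> face a b k \<longleftrightarrow> p \<in> usq a b \<times> {0..1} \<and> cnd a b k p"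
proof
  assume "p \<in> face a b k"
  then have "NN (p - cc a b) = 1" "lr k (p - cc a b) = 1" by (simp_all add: face_def)
  then show "p \<in> usq a b \<times> {0..1} \<and> cnd a b k p"
    using Q_NN[of p a b] lr_cnd[of k p a b] by simp
next
  assume a: "p \<in> usq a b \<times> {0..1} \<and> cnd a b k p"
  then have 1: "NN (p - cc a b) \<le> 1" using Q_NN[of p a b] by blast
  have 2: "lr k (p - cc a b) = 1" using a lr_cnd[of k p a b] by blast
  have "NN (p - cc a b) = 1" using 1 2 lr_le[of k "p - cc a b"] by linarith
  then show "p \<in> face a b k" using 2 by (simp add: face_def)
qed

lemma Bd_faces: "NN (p - cc a b) = 1 \<longleftrightarrow> (\<exists>k<6. p \<in> face a b k)"
proof
  assume a: "NN (p - cc a b) = 1"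
  obtain k where "k < 6" "NN (p - cc a b) = lr k (p - cc a b)" using NN_some by blast
  then show "\<exists>k<6. p \<in> face a b k" using a by (auto simp: face_def)
qed (auto simp: face_def)

lemma pyr_face: assumes z: "z \<in> pyr a b k" and sp: "NN (z - cc a b) > 0"
  shows "cc a b + (1 / NN (z - cc a b)) *\<^sub>R (z - cc a b) \<in> face a b k"
proof -
  define s where "s = NN (z - cc a b)"
  have l: "lr k (z - cc a b) = s" using z by (simp add: pyr_def s_def)
  have sp': "s > 0" using sp by (simp add: s_def)
  have "NN ((1 / s) *\<^sub>R (z - cc a b)) = 1" using sp' by (simp add: NN_scale s_def)
  moreover have "lr k ((1 / s) *\<^sub>R (z - cc a b)) = 1" using sp' by (simp add: lr_scale l)
  ultimately show ?thesis by (simp add: face_def s_def)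
qed

lemma pyr_cover: "usq a b \<times> {0..1} \<subseteq> (\<Union>k\<in>{..<6}. pyr a b k)"
proof
  fix z :: p3 assume "z \<in> usq a b \<times> {0..1}"
  then have 1: "NN (z - cc a b) \<le> 1" using Q_NN by blast
  obtain k where "k < 6" "NN (z - cc a b) = lr k (z - cc a b)" using NN_some by blast
  then show "z \<in> (\<Union>k\<in>{..<6}. pyr a b k)" using 1 unfolding pyr_def by blast
qed

lemma pyr_closed: "closed (pyr a b k)"
proof -
  have "6-lipschitz_on UNIV NN"
    by (rule lipschitz_onI) (auto simp: dist_norm NN_lip)
  then have c0: "continuous_on UNIV NN" by (rule lipschitz_on_continuous_on)
  have c1: "continuous_on UNIV (\<lambda>z. NN (z - cc a b))"
    by (rule continuous_on_compose2[OF c0]) (auto intro!: continuous_intros)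
  have c2: "continuous_on UNIV (\<lambda>z. lr k (z - cc a b))" unfolding lr_def
    by (intro continuous_intros)
  have e: "pyr a b k = {z. NN (z - cc a b) \<le> 1} \<inter> {z. NN (z - cc a b) = lr k (z - cc a b)}"
    unfolding pyr_def by blast
  have cA: "closed {z. NN (z - cc a b) \<le> 1}"
    by (rule closed_Collect_le[OF c1 continuous_on_const])
  have cB: "closed {z. NN (z - cc a b) = lr k (z - cc a b)}"
    by (rule closed_Collect_eq[OF c1 c2])
  show ?thesis unfolding e by (rule closed_Int[OF cA cB])
qed

lemma edge_good:
  fixes \<phi> \<psi> :: "real \<times> real \<Rightarrow> real \<times> real" and e :: "real \<Rightarrow> real \<times> real" and h :: "real \<Rightarrow> real"
  assumes L1: "C1-lipschitz_on S \<phi>" and L2: "C2-lipschitz_on S \<psi>"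
    and inv: "\<And>p. p \<in> S \<Longrightarrow> \<psi> (\<phi> p) = p" and maps: "\<And>p. p \<in> S \<Longrightarrow> \<phi> p \<in> S"
    and ein: "\<And>s. s \<in> {\<alpha>..\<alpha>+1} \<Longrightarrow> e s \<in> S"
    and ed: "\<And>s s'. s \<in> {\<alpha>..\<alpha>+1} \<Longrightarrow> s' \<in> {\<alpha>..\<alpha>+1} \<Longrightarrow> dist (e s) (e s') = \<bar>s - s'\<bar>"
    and hd: "\<And>s s'. s \<in> {\<alpha>..\<alpha>+1} \<Longrightarrow> s' \<in> {\<alpha>..\<alpha>+1} \<Longrightarrow> dist (\<phi> (e s)) (\<phi> (e s')) = \<bar>h s - h s'\<bar>"
    and h0: "h \<alpha> = \<alpha>" and h1: "h (\<alpha>+1) = \<alpha>+1"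
  shows "good_edge \<alpha> h (1/(C2+1)) (C1+1)"
proof -
  have C1: "C1 \<ge> 0" using lipschitz_on_nonneg[OF L1] .
  have C2: "C2 \<ge> 0" using lipschitz_on_nonneg[OF L2] .
  have up: "\<bar>h s - h s'\<bar> \<le> C1 * \<bar>s - s'\<bar>" if "s \<in> {\<alpha>..\<alpha>+1}" "s' \<in> {\<alpha>..\<alpha>+1}" for s s'
    using lipschitz_onD[OF L1 ein[OF that(1)] ein[OF that(2)]] hd[OF that] ed[OF that] by simp
  have low: "\<bar>s - s'\<bar> \<le> C2 * \<bar>h s - h s'\<bar>" if "s \<in> {\<alpha>..\<alpha>+1}" "s' \<in> {\<alpha>..\<alpha>+1}" for s s'
    using lipschitz_onD[OF L2 maps[OF ein[OF that(1)]] maps[OF ein[OF that(2)]]] hd[OF that] ed[OF that]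
      inv[OF ein[OF that(1)]] inv[OF ein[OF that(2)]] by simp
  have "C1-lipschitz_on {\<alpha>..\<alpha>+1} h"
    using up C1 by (intro lipschitz_onI) (auto simp: dist_real_def)
  then have cont: "continuous_on {\<alpha>..\<alpha>+1} h" by (rule lipschitz_on_continuous_on)
  have inj: "inj_on h {\<alpha>..\<alpha>+1}"
  proof (rule inj_onI)
    fix s s' assume "s \<in> {\<alpha>..\<alpha>+1}" "s' \<in> {\<alpha>..\<alpha>+1}" "h s = h s'"
    then show "s = s'" using low[of s s'] by simp
  qed
  have ord: "1/(C2+1)*(s'-s) \<le> h s' - h s \<and> h s' - h s \<le> (C1+1)*(s'-s)"
    if "\<alpha> \<le> s" "s \<le> s'" "s' \<le> \<alpha>+1" for s s'
  proof -
    have I: "s \<in> {\<alpha>..\<alpha>+1}" "s' \<in> {\<alpha>..\<alpha>+1}" using that by auto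
    have m: "h s \<le> h s'" using mono_edge[OF cont inj h0 h1 that] .
    have "s' - s \<le> C2 * (h s' - h s)" using low[OF I(2) I(1)] m that by simp
    also have "\<dots> \<le> (C2 + 1) * (h s' - h s)" using m by (simp add: algebra_simps)
    finally have 1: "1/(C2+1)*(s'-s) \<le> h s' - h s" using C2 by (simp add: field_simps)
    have "h s' - h s \<le> C1 * (s' - s)" using up[OF I(2) I(1)] m that by simp
    also have "\<dots> \<le> (C1 + 1) * (s' - s)" using that by (simp add: algebra_simps)
    finally show ?thesis using 1 by simp
  qed
  show ?thesis unfolding good_edge_def using ord C1 C2 h0 h1 by (auto simp: field_simps)
qed

definition bmap :: "real \<Rightarrow> real \<Rightarrow> (real \<times> real \<Rightarrow> real \<times> real) \<Rightarrow> p3 \<Rightarrow> p3" where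
  "bmap a b \<phi> p = (if snd p = 0 then p
     else if snd p = 1 then (\<phi> (fst p), 1)
     else if fst (fst p) = a+1 then ((a+1, interp (\<lambda>y. snd (\<phi> (a+1, y))) (snd (fst p)) (snd p)), snd p)
     else if fst (fst p) = a then ((a, interp (\<lambda>y. snd (\<phi> (a, y))) (snd (fst p)) (snd p)), snd p)
     else if snd (fst p) = b then ((interp (\<lambda>x. fst (\<phi> (x, b))) (fst (fst p)) (snd p), b), snd p)
     else ((interp (\<lambda>x. fst (\<phi> (x, b+1))) (fst (fst p)) (snd p), b+1), snd p))"

locale adm = sqh +
  fixes C1 C2 :: real
  assumes L1: "C1-lipschitz_on (usq a b) \<phi>" and L2: "C2-lipschitz_on (usq a b) \<psi>"
begin

lemma inv1: "p \<in> usq a b \<Longrightarrow> \<psi> (\<phi> p) = p"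
  using h by (simp add: homeomorphism_apply1)

lemma phiR: "y \<in> {b..b+1} \<Longrightarrow> \<phi> (a+1, y) = (a+1, snd (\<phi> (a+1, y)))"
  using edgeR by (metis prod.collapse)
lemma phiL: "y \<in> {b..b+1} \<Longrightarrow> \<phi> (a, y) = (a, snd (\<phi> (a, y)))"
  using edgeL by (metis prod.collapse)
lemma phiB: "x \<in> {a..a+1} \<Longrightarrow> \<phi> (x, b) = (fst (\<phi> (x, b)), b)"
  using edgeB by (metis prod.collapse)
lemma phiT: "x \<in> {a..a+1} \<Longrightarrow> \<phi> (x, b+1) = (fst (\<phi> (x, b+1)), b+1)"
  using edgeT by (metis prod.collapse)

lemma gR: "good_edge b (\<lambda>y. snd (\<phi> (a+1, y))) (1/(C2+1)) (C1+1)"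
proof (rule edge_good[OF L1 L2 inv1 maps, where e = "\<lambda>s. (a+1, s)"])
  fix s s' assume "s \<in> {b..b+1}" "s' \<in> {b..b+1}"
  show "dist (\<phi> (a+1, s)) (\<phi> (a+1, s')) = \<bar>snd (\<phi> (a+1, s)) - snd (\<phi> (a+1, s'))\<bar>"
  proof -
    obtain u u' where "\<phi> (a+1, s) = (a+1, u)" "\<phi> (a+1, s') = (a+1, u')" using phiR \<open>s \<in> _\<close> \<open>s' \<in> _\<close> by metis
    then show ?thesis by (simp add: dist_Pair_Pair dist_real_def)
  qed
qed (use v2 v4 in \<open>auto simp: usq_def dist_Pair_Pair dist_real_def\<close>)

lemma gL: "good_edge b (\<lambda>y. snd (\<phi> (a, y))) (1/(C2+1)) (C1+1)"
proof (rule edge_good[OF L1 L2 inv1 maps, where e = "\<lambda>s. (a, s)"])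
  fix s s' assume "s \<in> {b..b+1}" "s' \<in> {b..b+1}"
  show "dist (\<phi> (a, s)) (\<phi> (a, s')) = \<bar>snd (\<phi> (a, s)) - snd (\<phi> (a, s'))\<bar>"
  proof -
    obtain u u' where "\<phi> (a, s) = (a, u)" "\<phi> (a, s') = (a, u')" using phiL \<open>s \<in> _\<close> \<open>s' \<in> _\<close> by metis
    then show ?thesis by (simp add: dist_Pair_Pair dist_real_def)
  qed
qed (use v1 v3 in \<open>auto simp: usq_def dist_Pair_Pair dist_real_def\<close>)

lemma gB: "good_edge a (\<lambda>x. fst (\<phi> (x, b))) (1/(C2+1)) (C1+1)"
proof (rule edge_good[OF L1 L2 inv1 maps, where e = "\<lambda>s. (s, b)"])
  fix s s' assume "s \<in> {a..a+1}" "s' \<in> {a..a+1}"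
  show "dist (\<phi> (s, b)) (\<phi> (s', b)) = \<bar>fst (\<phi> (s, b)) - fst (\<phi> (s', b))\<bar>"
  proof -
    obtain u u' where "\<phi> (s, b) = (u, b)" "\<phi> (s', b) = (u', b)" using phiB \<open>s \<in> _\<close> \<open>s' \<in> _\<close> by metis
    then show ?thesis by (simp add: dist_Pair_Pair dist_real_def)
  qed
qed (use v1 v2 in \<open>auto simp: usq_def dist_Pair_Pair dist_real_def\<close>)

lemma gT: "good_edge a (\<lambda>x. fst (\<phi> (x, b+1))) (1/(C2+1)) (C1+1)"
proof (rule edge_good[OF L1 L2 inv1 maps, where e = "\<lambda>s. (s, b+1)"])
  fix s s' assume "s \<in> {a..a+1}" "s' \<in> {a..a+1}"
  show "dist (\<phi> (s, b+1)) (\<phi> (s', b+1)) = \<bar>fst (\<phi> (s, b+1)) - fst (\<phi> (s', b+1))\<bar>"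
  proof -
    obtain u u' where "\<phi> (s, b+1) = (u, b+1)" "\<phi> (s', b+1) = (u', b+1)" using phiT \<open>s \<in> _\<close> \<open>s' \<in> _\<close> by metis
    then show ?thesis by (simp add: dist_Pair_Pair dist_real_def)
  qed
qed (use v3 v4 in \<open>auto simp: usq_def dist_Pair_Pair dist_real_def\<close>)

end

lemma dist2:
  fixes u v u' v' :: real
  shows "\<bar>u - u'\<bar> \<le> dist (u,v) (u',v')" "\<bar>v - v'\<bar> \<le> dist (u,v) (u',v')"
    "dist (u,v) (u',v') \<le> \<bar>u - u'\<bar> + \<bar>v - v'\<bar>"
proof -
  have d: "dist (u,v) (u',v') = sqrt (\<bar>u - u'\<bar>\<^sup>2 + \<bar>v - v'\<bar>\<^sup>2)"
    by (simp add: dist_Pair_Pair dist_real_def)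
  show "\<bar>u - u'\<bar> \<le> dist (u,v) (u',v')" unfolding d by (rule real_sqrt_sum_squares_ge1)
  show "\<bar>v - v'\<bar> \<le> dist (u,v) (u',v')" unfolding d by (rule real_sqrt_sum_squares_ge2)
  show "dist (u,v) (u',v') \<le> \<bar>u - u'\<bar> + \<bar>v - v'\<bar>" unfolding d
    using sqrt_sum_squares_le_sum_abs[of "\<bar>u - u'\<bar>" "\<bar>v - v'\<bar>"] by simp
qed

lemma d3a: "dist ((c::real, u), t) ((c, u'), t') = dist (u, t) (u', t')"
  by (simp add: dist_Pair_Pair)
lemma d3b: "dist ((u, c::real), t) ((u', c), t') = dist (u, t) (u', t')"
  by (simp add: dist_Pair_Pair)
lemma d3c: "dist (p, t::real) (q, t) = dist p q"
  by (simp add: dist_Pair_Pair)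

lemma side2:
  assumes g: "good_edge \<alpha> h \<delta> K"
    and s: "s \<in> {\<alpha>..\<alpha>+1}" "s' \<in> {\<alpha>..\<alpha>+1}" and t: "t \<in> {0..1}" "t' \<in> {0..1}"
  shows "dist (interp h s t, t) (interp h s' t', t') \<le> (K+4) * dist (s,t) (s',t')"
    "dist (s,t) (s',t') \<le> (3/\<delta>) * dist (interp h s t, t) (interp h s' t', t')"
proof -
  define d where "d = dist (interp h s t, t) (interp h s' t', t')"
  define D where "D = dist (s,t) (s',t')"
  have d1: "\<bar>interp h s t - interp h s' t'\<bar> \<le> d" "\<bar>t - t'\<bar> \<le> d"
    "d \<le> \<bar>interp h s t - interp h s' t'\<bar> + \<bar>t - t'\<bar>" unfolding d_def by (rule dist2)+
  have D1: "\<bar>s - s'\<bar> \<le> D" "\<bar>t - t'\<bar> \<le> D" "D \<le> \<bar>s - s'\<bar> + \<bar>t - t'\<bar>" unfolding D_def by (rule dist2)+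
  have up: "\<bar>interp h s t - interp h s' t'\<bar> \<le> (K+2)*\<bar>s-s'\<bar> + \<bar>t-t'\<bar>"
    by (rule interp_up[OF g s t])
  have low: "\<delta>*\<bar>s-s'\<bar> - \<bar>t-t'\<bar> \<le> \<bar>interp h s t - interp h s' t'\<bar>"
    by (rule interp_low[OF g s t])
  have gb: "0 < \<delta>" "\<delta> \<le> 1" "1 \<le> K" using ge_basic[OF g] by auto
  have "(K+2)*\<bar>s-s'\<bar> \<le> (K+2)*D" using D1 gb by (intro mult_left_mono) auto
  then have "d \<le> (K+2)*D + 2*D" using d1 up D1 by linarith
  then show "dist (interp h s t, t) (interp h s' t', t') \<le> (K+4) * dist (s,t) (s',t')"
    by (simp add: d_def D_def algebra_simps)
  have "\<delta>*\<bar>s-s'\<bar> \<le> 2*d" using low d1 by linarith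
  then have A: "\<bar>s-s'\<bar> \<le> 2*(d/\<delta>)" using gb by (simp add: field_simps)
  have d0: "0 \<le> d" by (simp add: d_def)
  have "1 \<le> 1/\<delta>" using gb by (simp add: field_simps)
  then have "d * 1 \<le> d * (1/\<delta>)" using d0 by (rule mult_left_mono)
  then have B: "d \<le> d/\<delta>" by simp
  have "D \<le> 3*(d/\<delta>)" using A B D1 d1 by linarith
  then show "dist (s,t) (s',t') \<le> (3/\<delta>) * dist (interp h s t, t) (interp h s' t', t')"
    by (simp add: d_def D_def)
qed

lemma side_face:
  fixes E :: "real \<Rightarrow> real \<Rightarrow> p3" and B :: "p3 \<Rightarrow> p3"
  assumes g: "good_edge \<alpha> h \<delta> K"
    and F: "\<And>p. p \<in> F \<longleftrightarrow> (\<exists>s t. s \<in> {\<alpha>..\<alpha>+1} \<and> t \<in> {0..1} \<and> p = E s t)"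
    and dE: "\<And>s t s' t'. dist (E s t) (E s' t') = dist (s,t) (s',t')"
    and bm: "\<And>s t. s \<in> {\<alpha>..\<alpha>+1} \<Longrightarrow> t \<in> {0..1} \<Longrightarrow> B (E s t) = E (interp h s t) t"
  shows "\<And>p. p \<in> F \<Longrightarrow> B p \<in> F"
    and "\<And>p q. p \<in> F \<Longrightarrow> q \<in> F \<Longrightarrow> dist (B p) (B q) \<le> (K+4) * dist p q"
    and "\<And>p q. p \<in> F \<Longrightarrow> q \<in> F \<Longrightarrow> dist p q \<le> (3/\<delta>) * dist (B p) (B q)"
    and "\<And>q. q \<in> F \<Longrightarrow> \<exists>p\<in>F. B p = q"
proof -
  fix p assume "p \<in> F"
  then obtain s t where st: "s \<in> {\<alpha>..\<alpha>+1}" "t \<in> {0..1}" "p = E s t" using F by blast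
  then show "B p \<in> F" using F bm interp_range[OF g st(1,2)] by auto
next
  fix p q assume "p \<in> F" "q \<in> F"
  then obtain s t s' t' where st: "s \<in> {\<alpha>..\<alpha>+1}" "t \<in> {0..1}" "p = E s t"
    "s' \<in> {\<alpha>..\<alpha>+1}" "t' \<in> {0..1}" "q = E s' t'" using F by metis
  show "dist (B p) (B q) \<le> (K+4) * dist p q"
    using side2(1)[OF g st(1,4,2,5)] by (simp add: st bm[OF st(1,2)] bm[OF st(4,5)] dE)
  show "dist p q \<le> (3/\<delta>) * dist (B p) (B q)"
    using side2(2)[OF g st(1,4,2,5)] by (simp add: st bm[OF st(1,2)] bm[OF st(4,5)] dE)
next
  fix q assume "q \<in> F"
  then obtain s t where st: "s \<in> {\<alpha>..\<alpha>+1}" "t \<in> {0..1}" "q = E s t" using F by blast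
  obtain s0 where s0: "s0 \<in> {\<alpha>..\<alpha>+1}" "interp h s0 t = s" using interp_surj[OF g st(2,1)] by blast
  have "E s0 t \<in> F" using F s0 st by blast
  moreover have "B (E s0 t) = q" using bm[OF s0(1) st(2)] s0 st by simp
  ultimately show "\<exists>p\<in>F. B p = q" by blast
qed

context adm
begin

abbreviation "hR \<equiv> \<lambda>y. snd (\<phi> (a+1, y))"
abbreviation "hL \<equiv> \<lambda>y. snd (\<phi> (a, y))"
abbreviation "hB \<equiv> \<lambda>x. fst (\<phi> (x, b))"
abbreviation "hT \<equiv> \<lambda>x. fst (\<phi> (x, b+1))"

lemma bm0: "bmap a b \<phi> ((x,y),0) = ((x,y),0)"
  by (simp add: bmap_def)

lemma bm1: "bmap a b \<phi> ((x,y),1) = (\<phi> (x,y),1)"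
  by (simp add: bmap_def)

lemma bm2: assumes "y \<in> {b..b+1}" "t \<in> {0..1}"
  shows "bmap a b \<phi> ((a+1,y),t) = ((a+1, interp hR y t), t)"
  using assms edgeR[OF assms(1)] by (auto simp: bmap_def prod_eq_iff interp_0[OF gR] interp_1[OF gR])

lemma bm3: assumes "y \<in> {b..b+1}" "t \<in> {0..1}"
  shows "bmap a b \<phi> ((a,y),t) = ((a, interp hL y t), t)"
  using assms edgeL[OF assms(1)] by (auto simp: bmap_def prod_eq_iff interp_0[OF gL] interp_1[OF gL])

lemma bm4: assumes "x \<in> {a..a+1}" "t \<in> {0..1}"
  shows "bmap a b \<phi> ((x,b),t) = ((interp hB x t, b), t)"
  using assms edgeB[OF assms(1)]
  by (auto simp: bmap_def prod_eq_iff interp_0[OF gB] interp_1[OF gB] interp_a[OF gR]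
      interp_a1[OF gB] interp_a[OF gL] interp_a[OF gB])

lemma bm5: assumes "x \<in> {a..a+1}" "t \<in> {0..1}"
  shows "bmap a b \<phi> ((x,b+1),t) = ((interp hT x t, b+1), t)"
  using assms edgeT[OF assms(1)]
  by (auto simp: bmap_def prod_eq_iff interp_0[OF gT] interp_1[OF gT] interp_a1[OF gR]
      interp_a1[OF gT] interp_a1[OF gL] interp_a[OF gT])


lemma C12: "C1 \<ge> 0" "C2 \<ge> 0"
  using lipschitz_on_nonneg[OF L1] lipschitz_on_nonneg[OF L2] by auto

lemma K3: "3 / (1 / (C2 + 1)) = 3 * (C2 + 1)" using C12 by simp

lemma fc2: "p \<in> face a b 2 \<longleftrightarrow> (\<exists>s t. s \<in> {b..b+1} \<and> t \<in> {0..1} \<and> p = ((a+1,s),t))"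
proof -
  obtain x y t where p: "p = ((x,y),t)" by (metis prod.collapse)
  show ?thesis unfolding p face_char cnd_def by (auto simp: usq_def)
qed
lemma fc3: "p \<in> face a b 3 \<longleftrightarrow> (\<exists>s t. s \<in> {b..b+1} \<and> t \<in> {0..1} \<and> p = ((a,s),t))"
proof -
  obtain x y t where p: "p = ((x,y),t)" by (metis prod.collapse)
  show ?thesis unfolding p face_char cnd_def by (auto simp: usq_def)
qed
lemma fc4: "p \<in> face a b 4 \<longleftrightarrow> (\<exists>s t. s \<in> {a..a+1} \<and> t \<in> {0..1} \<and> p = ((s,b),t))"
proof -
  obtain x y t where p: "p = ((x,y),t)" by (metis prod.collapse)
  show ?thesis unfolding p face_char cnd_def by (auto simp: usq_def)
qed
lemma fc5: "p \<in> face a b 5 \<longleftrightarrow> (\<exists>s t. s \<in> {a..a+1} \<and> t \<in> {0..1} \<and> p = ((s,b+1),t))"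
proof -
  obtain x y t where p: "p = ((x,y),t)" by (metis prod.collapse)
  show ?thesis unfolding p face_char cnd_def by (auto simp: usq_def)
qed
lemma fc1: "p \<in> face a b 1 \<longleftrightarrow> (\<exists>x. x \<in> usq a b \<and> p = (x,1))"
proof -
  obtain x t where p: "p = (x,t)" by (metis prod.collapse)
  show ?thesis unfolding p face_char cnd_def by (simp del: split_paired_Ex) linarith
qed
lemma fc0: "p \<in> face a b 0 \<longleftrightarrow> (\<exists>x. x \<in> usq a b \<and> p = (x,0))"
proof -
  obtain x t where p: "p = (x,t)" by (metis prod.collapse)
  show ?thesis unfolding p face_char cnd_def by (simp del: split_paired_Ex) linarith
qed

lemmas sf2 = side_face[OF gR fc2 d3a bm2, unfolded K3]
lemmas sf3 = side_face[OF gL fc3 d3a bm3, unfolded K3]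
lemmas sf4 = side_face[OF gB fc4 d3b bm4, unfolded K3]
lemmas sf5 = side_face[OF gT fc5 d3b bm5, unfolded K3]

lemma bmt: "bmap a b \<phi> (x,1) = (\<phi> x, 1)" by (simp add: bmap_def)
lemma bmb: "bmap a b \<phi> (x,0) = (x, 0)" by (simp add: bmap_def)

lemma fp1:
  shows "\<And>p. p \<in> face a b 1 \<Longrightarrow> bmap a b \<phi> p \<in> face a b 1"
    and "\<And>p q. p \<in> face a b 1 \<Longrightarrow> q \<in> face a b 1 \<Longrightarrow> dist (bmap a b \<phi> p) (bmap a b \<phi> q) \<le> (C1+1+4) * dist p q"
    and "\<And>p q. p \<in> face a b 1 \<Longrightarrow> q \<in> face a b 1 \<Longrightarrow> dist p q \<le> (3*(C2+1)) * dist (bmap a b \<phi> p) (bmap a b \<phi> q)"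
    and "\<And>q. q \<in> face a b 1 \<Longrightarrow> \<exists>p\<in>face a b 1. bmap a b \<phi> p = q"
proof -
  fix p assume "p \<in> face a b 1"
  then obtain x where "x \<in> usq a b" "p = (x,1)" using fc1 by blast
  then show "bmap a b \<phi> p \<in> face a b 1" using fc1 maps bmt by blast
next
  fix p q assume "p \<in> face a b 1" "q \<in> face a b 1"
  then obtain x y where xy: "x \<in> usq a b" "p = (x,1)" "y \<in> usq a b" "q = (y,1)" using fc1 by metis
  have 1: "dist (\<phi> x) (\<phi> y) \<le> C1 * dist x y" using lipschitz_onD[OF L1 xy(1,3)] .
  have 2: "dist x y \<le> C2 * dist (\<phi> x) (\<phi> y)"
    using lipschitz_onD[OF L2 maps[OF xy(1)] maps[OF xy(3)]] inv1[OF xy(1)] inv1[OF xy(3)] by simp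
  have "C1 * dist x y \<le> (C1+1+4) * dist x y" by (intro mult_right_mono) auto
  then show "dist (bmap a b \<phi> p) (bmap a b \<phi> q) \<le> (C1+1+4) * dist p q"
    using 1 by (simp add: xy bmt d3c)
  have "C2 * dist (\<phi> x) (\<phi> y) \<le> (3*(C2+1)) * dist (\<phi> x) (\<phi> y)"
    using C12 by (intro mult_right_mono) auto
  then show "dist p q \<le> (3*(C2+1)) * dist (bmap a b \<phi> p) (bmap a b \<phi> q)"
    using 2 by (simp add: xy bmt d3c)
next
  fix q assume "q \<in> face a b 1"
  then obtain y where y: "y \<in> usq a b" "q = (y,1)" using fc1 by blast
  have "\<psi> y \<in> usq a b" "\<phi> (\<psi> y) = y" using h y(1)
    by (auto simp: homeomorphism_def)
  then show "\<exists>p\<in>face a b 1. bmap a b \<phi> p = q" using y fc1 bmt by metis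
qed

lemma fp0:
  shows "\<And>p. p \<in> face a b 0 \<Longrightarrow> bmap a b \<phi> p \<in> face a b 0"
    and "\<And>p q. p \<in> face a b 0 \<Longrightarrow> q \<in> face a b 0 \<Longrightarrow> dist (bmap a b \<phi> p) (bmap a b \<phi> q) \<le> (C1+1+4) * dist p q"
    and "\<And>p q. p \<in> face a b 0 \<Longrightarrow> q \<in> face a b 0 \<Longrightarrow> dist p q \<le> (3*(C2+1)) * dist (bmap a b \<phi> p) (bmap a b \<phi> q)"
    and "\<And>q. q \<in> face a b 0 \<Longrightarrow> \<exists>p\<in>face a b 0. bmap a b \<phi> p = q"
proof -
  fix p assume "p \<in> face a b 0"
  then obtain x where "x \<in> usq a b" "p = (x,0)" using fc0 by blast
  then show "bmap a b \<phi> p \<in> face a b 0" using fc0 bmb by metis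
next
  fix p q assume "p \<in> face a b 0" "q \<in> face a b 0"
  then obtain x y where xy: "x \<in> usq a b" "p = (x,0)" "y \<in> usq a b" "q = (y,0)" using fc0 by metis
  have "1 * dist p q \<le> (C1+1+4) * dist p q" using C12 by (intro mult_right_mono) auto
  then show "dist (bmap a b \<phi> p) (bmap a b \<phi> q) \<le> (C1+1+4) * dist p q" by (simp add: xy bmb)
  have "1 * dist p q \<le> (3*(C2+1)) * dist p q" using C12 by (intro mult_right_mono) auto
  then show "dist p q \<le> (3*(C2+1)) * dist (bmap a b \<phi> p) (bmap a b \<phi> q)" by (simp add: xy bmb)
next
  fix q assume "q \<in> face a b 0"
  then obtain y where y: "y \<in> usq a b" "q = (y,0)" using fc0 by blast
  then show "\<exists>p\<in>face a b 0. bmap a b \<phi> p = q" using y bmb \<open>q \<in> face a b 0\<close> by metis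
qed

lemma fp_all:
  assumes k: "k < 6"
  shows "\<And>p. p \<in> face a b k \<Longrightarrow> bmap a b \<phi> p \<in> face a b k"
    and "\<And>p q. p \<in> face a b k \<Longrightarrow> q \<in> face a b k \<Longrightarrow> dist (bmap a b \<phi> p) (bmap a b \<phi> q) \<le> (C1+1+4) * dist p q"
    and "\<And>p q. p \<in> face a b k \<Longrightarrow> q \<in> face a b k \<Longrightarrow> dist p q \<le> (3*(C2+1)) * dist (bmap a b \<phi> p) (bmap a b \<phi> q)"
    and "\<And>q. q \<in> face a b k \<Longrightarrow> \<exists>p\<in>face a b k. bmap a b \<phi> p = q"
proof -
  have c: "k = 0 \<or> k = 1 \<or> k = 2 \<or> k = 3 \<or> k = 4 \<or> k = 5" using k by auto
  show "\<And>p. p \<in> face a b k \<Longrightarrow> bmap a b \<phi> p \<in> face a b k"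
    using c fp0(1) fp1(1) sf2(1) sf3(1) sf4(1) sf5(1) by (elim disjE) simp_all
  show "\<And>p q. p \<in> face a b k \<Longrightarrow> q \<in> face a b k \<Longrightarrow> dist (bmap a b \<phi> p) (bmap a b \<phi> q) \<le> (C1+1+4) * dist p q"
    using c fp0(2) fp1(2) sf2(2) sf3(2) sf4(2) sf5(2) by (elim disjE) simp_all
  show "\<And>p q. p \<in> face a b k \<Longrightarrow> q \<in> face a b k \<Longrightarrow> dist p q \<le> (3*(C2+1)) * dist (bmap a b \<phi> p) (bmap a b \<phi> q)"
    using c fp0(3) fp1(3) sf2(3) sf3(3) sf4(3) sf5(3) by (elim disjE) simp_all
  show "\<And>q. q \<in> face a b k \<Longrightarrow> \<exists>p\<in>face a b k. bmap a b \<phi> p = q"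
    using c fp0(4) fp1(4) sf2(4) sf3(4) sf4(4) sf5(4) by (elim disjE) simp_all
qed

end

lemma interp_eq:
  assumes g: "good_edge \<alpha> h \<delta> K" and s: "s \<in> {\<alpha>..\<alpha>+1}" and t: "t \<in> {0..1}"
  shows "interp h s t = \<alpha> \<Longrightarrow> s = \<alpha>" "interp h s t = \<alpha>+1 \<Longrightarrow> s = \<alpha>+1"
proof -
  have a: "\<alpha> \<in> {\<alpha>..\<alpha>+1}" "\<alpha>+1 \<in> {\<alpha>..\<alpha>+1}" by auto
  show "interp h s t = \<alpha> \<Longrightarrow> s = \<alpha>" using interp_inj[OF g s a(1) t] interp_a[OF g] by simp
  show "interp h s t = \<alpha>+1 \<Longrightarrow> s = \<alpha>+1" using interp_inj[OF g s a(2) t] interp_a1[OF g] by simp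
qed

context adm
begin

lemma phi_back:
  assumes x: "x \<in> usq a b"
  shows "fst (\<phi> x) = a+1 \<Longrightarrow> fst x = a+1" "fst (\<phi> x) = a \<Longrightarrow> fst x = a"
    "snd (\<phi> x) = b \<Longrightarrow> snd x = b" "snd (\<phi> x) = b+1 \<Longrightarrow> snd x = b+1"
proof -
  have S: "sqh a b \<psi> \<phi>" by (rule sym)
  have fx: "\<phi> x \<in> usq a b" using maps[OF x] .
  obtain u v where uv: "\<phi> x = (u,v)" by (metis prod.collapse)
  have inS: "u \<in> {a..a+1}" "v \<in> {b..b+1}" using fx uv by (auto simp: usq_def)
  have xe: "x = \<psi> (u,v)" using inv1[OF x] uv by simp
  show "fst (\<phi> x) = a+1 \<Longrightarrow> fst x = a+1" using sqh.edgeR[OF S inS(2)] xe uv by auto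
  show "fst (\<phi> x) = a \<Longrightarrow> fst x = a" using sqh.edgeL[OF S inS(2)] xe uv by auto
  show "snd (\<phi> x) = b \<Longrightarrow> snd x = b" using sqh.edgeB[OF S inS(1)] xe uv by auto
  show "snd (\<phi> x) = b+1 \<Longrightarrow> snd x = b+1" using sqh.edgeT[OF S inS(1)] xe uv by auto
qed

lemma cnd_back:
  assumes q: "q \<in> face a b i" and i: "i < 6" and c: "cnd a b j (bmap a b \<phi> q)"
  shows "cnd a b j q"
proof -
  have ci: "i = 0 \<or> i = 1 \<or> i = 2 \<or> i = 3 \<or> i = 4 \<or> i = 5" using i by auto
  moreover {
    assume "i = 0"
    then obtain x where "q = (x,0)" using q fc0 by blast
    then have ?thesis using c by (simp add: bmb)
  } moreover {
    assume "i = 1"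
    then obtain x where x: "x \<in> usq a b" "q = (x,1)" using q fc1 by blast
    then have ?thesis using c phi_back[OF x(1)] by (auto simp: bmt cnd_def split: if_splits)
  } moreover {
    assume "i = 2"
    then obtain s t where st: "s \<in> {b..b+1}" "t \<in> {0..1}" "q = ((a+1,s),t)" using q fc2 by blast
    then have ?thesis using c interp_eq[OF gR st(1,2)] by (auto simp: bm2 cnd_def split: if_splits)
  } moreover {
    assume "i = 3"
    then obtain s t where st: "s \<in> {b..b+1}" "t \<in> {0..1}" "q = ((a,s),t)" using q fc3 by blast
    then have ?thesis using c interp_eq[OF gL st(1,2)] by (auto simp: bm3 cnd_def split: if_splits)
  } moreover {
    assume "i = 4"
    then obtain s t where st: "s \<in> {a..a+1}" "t \<in> {0..1}" "q = ((s,b),t)" using q fc4 by blast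
    then have ?thesis using c interp_eq[OF gB st(1,2)] by (auto simp: bm4 cnd_def split: if_splits)
  } moreover {
    assume "i = 5"
    then obtain s t where st: "s \<in> {a..a+1}" "t \<in> {0..1}" "q = ((s,b+1),t)" using q fc5 by blast
    then have ?thesis using c interp_eq[OF gT st(1,2)] by (auto simp: bm5 cnd_def split: if_splits)
  }
  ultimately show ?thesis by blast
qed


lemma inBd: "p \<in> face a b k \<Longrightarrow> NN (p - cc a b) = 1" by (simp add: face_def)

lemma bm_Bd: assumes "NN (p - cc a b) = 1" shows "NN (bmap a b \<phi> p - cc a b) = 1"
proof -
  obtain k where "k < 6" "p \<in> face a b k" using assms Bd_faces by blast
  then show ?thesis using fp_all(1) inBd by blast
qed

lemma bm_inj: "inj_on (bmap a b \<phi>) {p. NN (p - cc a b) = 1}"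
proof (rule inj_onI)
  fix p q assume p: "p \<in> {p. NN (p - cc a b) = 1}" and q: "q \<in> {p. NN (p - cc a b) = 1}"
    and e: "bmap a b \<phi> p = bmap a b \<phi> q"
  obtain j where j: "j < 6" "p \<in> face a b j" using p Bd_faces by blast
  obtain i where i: "i < 6" "q \<in> face a b i" using q Bd_faces by blast
  have "bmap a b \<phi> p \<in> face a b j" using fp_all(1)[OF j] .
  then have "cnd a b j (bmap a b \<phi> q)" using e face_char by metis
  then have "cnd a b j q" using cnd_back[OF i(2) i(1)] by blast
  moreover have "q \<in> usq a b \<times> {0..1}" using i(2) face_char by blast
  ultimately have qj: "q \<in> face a b j" using face_char by blast
  have "dist p q \<le> (3*(C2+1)) * dist (bmap a b \<phi> p) (bmap a b \<phi> q)" using fp_all(3)[OF j(1) j(2) qj] .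
  then show "p = q" using e by simp
qed

lemma bm_surj: assumes "NN (q - cc a b) = 1" shows "\<exists>p. NN (p - cc a b) = 1 \<and> bmap a b \<phi> p = q"
proof -
  obtain k where k: "k < 6" "q \<in> face a b k" using assms Bd_faces by blast
  then obtain p where "p \<in> face a b k" "bmap a b \<phi> p = q" using fp_all(4) by blast
  then show ?thesis using inBd by blast
qed

definition gi :: "p3 \<Rightarrow> p3" where "gi = inv_into {p. NN (p - cc a b) = 1} (bmap a b \<phi>)"

lemma g1: "NN (p - cc a b) = 1 \<Longrightarrow> gi (bmap a b \<phi> p) = p"
  unfolding gi_def using bm_inj by (simp add: inv_into_f_f)

lemma g23: assumes "NN (q - cc a b) = 1" shows "bmap a b \<phi> (gi q) = q" "NN (gi q - cc a b) = 1"
proof -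
  obtain p where p: "NN (p - cc a b) = 1" "bmap a b \<phi> p = q" using bm_surj[OF assms] by blast
  then show "bmap a b \<phi> (gi q) = q" "NN (gi q - cc a b) = 1" using g1[OF p(1)] by auto
qed

lemma gface: assumes k: "k < 6" and q: "q \<in> face a b k" shows "gi q \<in> face a b k"
proof -
  obtain p where p: "p \<in> face a b k" "bmap a b \<phi> p = q" using fp_all(4)[OF k q] by blast
  then show ?thesis using g1[OF inBd[OF p(1)]] by simp
qed

lemma glip: assumes k: "k < 6" shows "(3*(C2+1))-lipschitz_on (face a b k) gi"
proof (rule lipschitz_onI)
  fix q q' assume q: "q \<in> face a b k" and q': "q' \<in> face a b k"
  have "dist (gi q) (gi q') \<le> (3*(C2+1)) * dist (bmap a b \<phi> (gi q)) (bmap a b \<phi> (gi q'))"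
    using fp_all(3)[OF k gface[OF k q] gface[OF k q']] .
  then show "dist (gi q) (gi q') \<le> (3*(C2+1)) * dist q q'"
    using g23(1)[OF inBd[OF q]] g23(1)[OF inBd[OF q']] by simp
qed (use C12 in simp)

lemma blip: assumes k: "k < 6" shows "(C1+1+4)-lipschitz_on (face a b k) (bmap a b \<phi>)"
  using fp_all(2)[OF k] C12 by (intro lipschitz_onI) auto

lemma convQ: "convex (usq a b \<times> {0..1::real})"
  unfolding usq_def by (intro convex_Times convex_real_interval)

lemma cone_lip_Q:
  assumes fl: "\<And>k. k < 6 \<Longrightarrow> K-lipschitz_on (face a b k) f"
    and fm: "\<And>k p. k < 6 \<Longrightarrow> p \<in> face a b k \<Longrightarrow> f p \<in> face a b k" and K: "K \<ge> 0"
  shows "(K + 10 * (K + 1))-lipschitz_on (usq a b \<times> {0..1}) (cone (cc a b) f)"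
proof (rule glue[OF convQ finite_lessThan pyr_closed pyr_cover])
  fix k assume "k \<in> {..<6::nat}"
  then have k: "k < 6" by simp
  have "(K + 10 * (K + 1))-lipschitz_on (pyr a b k) (cone (cc a b) f)"
  proof (rule cone_lip[OF _ fl[OF k]])
    show "\<And>z. z \<in> pyr a b k \<Longrightarrow> 0 < NN (z - cc a b) \<Longrightarrow> cc a b + (1 / NN (z - cc a b)) *\<^sub>R (z - cc a b) \<in> face a b k"
      by (rule pyr_face)
    show "\<And>p. p \<in> face a b k \<Longrightarrow> NN (p - cc a b) = 1 \<and> NN (f p - cc a b) = 1"
      using fm[OF k] inBd by blast
  qed
  then show "(K + 10 * (K + 1))-lipschitz_on (pyr a b k \<inter> (usq a b \<times> {0..1})) (cone (cc a b) f)"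
    by (rule lipschitz_on_subset) auto
qed (use K in simp)

lemma main:
  "bilipschitz_homeo (usq a b \<times> {0..1}) (usq a b \<times> {0..1}) (cone (cc a b) (bmap a b \<phi>))"
proof -
  define F where "F = cone (cc a b) (bmap a b \<phi>)"
  define G where "G = cone (cc a b) gi"
  have GF: "G (F z) = z" "NN (F z - cc a b) = NN (z - cc a b)" for z
    unfolding F_def G_def using cone_inv[of "cc a b" "bmap a b \<phi>" gi z] bm_Bd g1 by auto
  have FG: "F (G z) = z" "NN (G z - cc a b) = NN (z - cc a b)" for z
    unfolding F_def G_def using cone_inv[of "cc a b" gi "bmap a b \<phi>" z] g23 by auto
  have LF: "((C1+1+4) + 10 * ((C1+1+4) + 1))-lipschitz_on (usq a b \<times> {0..1}) F"
    unfolding F_def using cone_lip_Q[OF blip fp_all(1)] C12 by auto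
  have LG: "(3*(C2+1) + 10 * (3*(C2+1) + 1))-lipschitz_on (usq a b \<times> {0..1}) G"
    unfolding G_def using cone_lip_Q[OF glip gface] C12 by auto
  have "homeomorphism (usq a b \<times> {0..1}) (usq a b \<times> {0..1}) F G"
  proof (rule homeomorphismI)
    show "continuous_on (usq a b \<times> {0..1}) F" using LF by (rule lipschitz_on_continuous_on)
    show "continuous_on (usq a b \<times> {0..1}) G" using LG by (rule lipschitz_on_continuous_on)
    show "F ` (usq a b \<times> {0..1}) \<subseteq> usq a b \<times> {0..1}"
    proof (rule image_subsetI)
      fix z :: p3 assume "z \<in> usq a b \<times> {0..1}"
      then have "NN (z - cc a b) \<le> 1" using Q_NN by blast
      then show "F z \<in> usq a b \<times> {0..1}" by (intro Q_NN[THEN iffD2]) (simp add: GF(2))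
    qed
    show "G ` (usq a b \<times> {0..1}) \<subseteq> usq a b \<times> {0..1}"
    proof (rule image_subsetI)
      fix z :: p3 assume "z \<in> usq a b \<times> {0..1}"
      then have "NN (z - cc a b) \<le> 1" using Q_NN by blast
      then show "G z \<in> usq a b \<times> {0..1}" by (intro Q_NN[THEN iffD2]) (simp add: FG(2))
    qed
  qed (use GF FG in auto)
  then show ?thesis unfolding bilipschitz_homeo_def F_def[symmetric] using LF LG by blast
qed

lemma val0: assumes "x \<in> usq a b" shows "cone (cc a b) (bmap a b \<phi>) (x, 0) = (x, 0)"
proof -
  have "(x,0) \<in> face a b 0" using fc0 assms by blast
  then show ?thesis using cone_bd[OF inBd] bmb by metis
qed

lemma val1: assumes "x \<in> usq a b" shows "cone (cc a b) (bmap a b \<phi>) (x, 1) = (\<phi> x, 1)"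
proof -
  have "(x,1) \<in> face a b 1" using fc1 assms by blast
  then show ?thesis using cone_bd[OF inBd] bmt by metis
qed

end

definition rs :: "real \<Rightarrow> real \<Rightarrow> (real \<times> real \<Rightarrow> real \<times> real) \<Rightarrow> real \<times> real \<Rightarrow> real \<times> real" where
  "rs a b \<phi> x = (if x \<in> usq a b then \<phi> x else x)"

lemma adm_rs:
  assumes "sq_admissible a b \<phi>"
  obtains g C1 C2 where "adm a b (rs a b \<phi>) g C1 C2"
proof -
  obtain g C1 C2 where h: "homeomorphism (usq a b) (usq a b) \<phi> g"
    and l1: "C1-lipschitz_on (usq a b) \<phi>" and l2: "C2-lipschitz_on (usq a b) g"
    using assms unfolding sq_admissible_def bilipschitz_homeo_def by blast
  have h': "homeomorphism (usq a b) (usq a b) (rs a b \<phi>) g"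
    by (rule homeomorphism_cong[OF h]) (auto simp: rs_def)
  have l1': "C1-lipschitz_on (usq a b) (rs a b \<phi>)"
    using l1 by (rule lipschitz_on_transform) (simp add: rs_def)
  have m: "(a,b) \<in> usq a b" "(a+1,b) \<in> usq a b" "(a,b+1) \<in> usq a b" "(a+1,b+1) \<in> usq a b"
    by (auto simp: usq_def)
  have "adm a b (rs a b \<phi>) g C1 C2"
    using h' l1' l2 assms m unfolding sq_admissible_def
    by unfold_locales (simp_all add: rs_def)
  then show ?thesis by (rule that)
qed

lemma edge_NN:
  assumes "y \<in> {0..1}" "t \<in> {0..1}"
  shows "NN (((1,y),t) - cc 0 0) = 1" "NN (((1,y),t) - cc 1 0) = 1"
proof -
  have "((1,y),t) \<in> face 0 0 2" "((1,y),t) \<in> face 1 0 3"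
    using assms by (simp_all add: face_char cnd_def usq_def)
  then show "NN (((1,y),t) - cc 0 0) = 1" "NN (((1,y),t) - cc 1 0) = 1"
    by (simp_all add: face_def)
qed

theorem lemma4p4:
  shows "\<exists>Ext :: real \<Rightarrow> real \<Rightarrow> (real \<times> real \<Rightarrow> real \<times> real)
                \<Rightarrow> ((real \<times> real) \<times> real \<Rightarrow> (real \<times> real) \<times> real).
    (\<forall>a b \<phi> \<psi>. (\<forall>x\<in>usq a b. \<phi> x = \<psi> x) \<longrightarrow>
        (\<forall>p\<in>usq a b \<times> {0..1}. Ext a b \<phi> p = Ext a b \<psi> p)) \<and>
    (\<forall>a b \<phi>. sq_admissible a b \<phi> \<longrightarrow>
        bilipschitz_homeo (usq a b \<times> {0..1}) (usq a b \<times> {0..1}) (Ext a b \<phi>) \<and>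
        (\<forall>x\<in>usq a b. Ext a b \<phi> (x, 0) = (x, 0)) \<and>
        (\<forall>x\<in>usq a b. Ext a b \<phi> (x, 1) = (\<phi> x, 1))) \<and>
    (\<forall>\<phi> \<phi>'. sq_admissible 0 0 \<phi> \<longrightarrow> sq_admissible 1 0 \<phi>' \<longrightarrow>
        (\<forall>y\<in>{0..1}. \<phi> (1, y) = \<phi>' (1, y)) \<longrightarrow>
        (\<forall>y\<in>{0..1}. \<forall>t\<in>{0..1}. Ext 0 0 \<phi> ((1, y), t) = Ext 1 0 \<phi>' ((1, y), t)))"
proof (intro exI[of _ "\<lambda>a b \<phi>. cone (cc a b) (bmap a b (rs a b \<phi>))"] conjI allI impI ballI)
  fix a b and \<phi> \<psi> :: "real \<times> real \<Rightarrow> real \<times> real" and p :: p3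
  assume "\<forall>x\<in>usq a b. \<phi> x = \<psi> x"
  then have "rs a b \<phi> = rs a b \<psi>" by (auto simp: rs_def)
  then show "cone (cc a b) (bmap a b (rs a b \<phi>)) p = cone (cc a b) (bmap a b (rs a b \<psi>)) p" by simp
next
  fix a b \<phi> assume adm: "sq_admissible a b \<phi>"
  obtain g C1 C2 where A: "adm a b (rs a b \<phi>) g C1 C2" using adm_rs[OF adm] by blast
  show "bilipschitz_homeo (usq a b \<times> {0..1}) (usq a b \<times> {0..1}) (cone (cc a b) (bmap a b (rs a b \<phi>)))"
    by (rule adm.main[OF A])
  fix x assume x: "x \<in> usq a b"
  show "cone (cc a b) (bmap a b (rs a b \<phi>)) (x, 0) = (x, 0)" by (rule adm.val0[OF A x])
  show "cone (cc a b) (bmap a b (rs a b \<phi>)) (x, 1) = (\<phi> x, 1)"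
    using adm.val1[OF A x] x by (simp add: rs_def)
next
  fix \<phi> \<phi>' :: "real \<times> real \<Rightarrow> real \<times> real" and y t :: real
  assume e: "\<forall>y\<in>{0..1}. \<phi> (1, y) = \<phi>' (1, y)" and y: "y \<in> {0..1}" and t: "t \<in> {0..1}"
  have r1: "rs 0 0 \<phi> (1, y) = \<phi> (1, y)" "rs 1 0 \<phi>' (1, y) = \<phi>' (1, y)"
    using y by (auto simp: rs_def usq_def)
  have ee: "\<phi> (1, y) = \<phi>' (1, y)" using e y by blast
  show "cone (cc 0 0) (bmap 0 0 (rs 0 0 \<phi>)) ((1, y), t) = cone (cc 1 0) (bmap 1 0 (rs 1 0 \<phi>')) ((1, y), t)"
    using cone_bd[OF edge_NN(1)[OF y t]] cone_bd[OF edge_NN(2)[OF y t]] r1 ee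
    by (simp add: bmap_def interp_def)
qed

end
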